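(* Let $\rho>0$ be a smooth function on $(0,T)\times\mathbb T^d$ and let $h$ be a smooth function on $(0,\infty)$ such that, for some constant $C_0$, $h(\rho)\ge0$, $h'(\rho)>0$, $h'(\rho)\rho\le C_0h(\rho)$ and $|h''(\rho)|\rho\le C_0h'(\rho)$. Let $\phi$ satisfy $\rho\phi'(\rho)=h'(\rho)$. Then there is a constant $C$ (depending on $C_0$) such that $$\iint h'(\rho)|\nabla(h'(\rho)\nabla\sqrt\rho)|^2+\iint\frac{(h'(\rho))^3|\nabla\sqrt\rho|^4}{\rho}\le C\iint h(\rho)|\nabla^2\phi(\rho)|^2.$$ If moreover $h'(\rho)\ge c>0$ for some constant $c$, then $$\iint|\nabla^2\sqrt\rho|^2+\iint|\nabla\rho^{1/4}|^4\le C\iint h(\rho)|\nabla^2\phi(\rho)|^2,$$ with $C$ depending also on $c$.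
   Context: $\mathbb T^d$ is the flat torus ($d\in\{2,3\}$) and $\iint$ denotes integration over $(0,T)\times\mathbb T^d$. *)

theory Defs
  imports "HOL-Analysis.Analysis"
begin

fun iter_dd :: "'a::real_normed_vector list \<Rightarrow> ('a \<Rightarrow> real) \<Rightarrow> 'a \<Rightarrow> real" where
  "iter_dd [] f = f"
| "iter_dd (v # vs) f = (\<lambda>x. frechet_derivative (iter_dd vs f) (at x) v)"

definition C_inf_on :: "'a::euclidean_space set \<Rightarrow> ('a \<Rightarrow> real) \<Rightarrow> bool" where
  "C_inf_on S f \<longleftrightarrow> (\<forall>vs. set vs \<subseteq> Basis \<longrightarrow> iter_dd vs f differentiable_on S)"

definition smooth_pos :: "(real \<Rightarrow> real) \<Rightarrow> bool" where
  "smooth_pos h \<longleftrightarrow> (\<forall>k. (deriv ^^ k) h differentiable_on {0<..})"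

text \<open>Functions of (t,x) that are 1-periodic in every space variable,
  i.e. functions on (time) x flat torus R^d/Z^d.\<close>
definition periodic_x :: "(real \<times> (real^'n) \<Rightarrow> real) \<Rightarrow> bool" where
  "periodic_x f \<longleftrightarrow> (\<forall>t x i. f (t, x + axis i 1) = f (t, x))"

definition pdx :: "'n::finite \<Rightarrow> (real \<times> (real^'n) \<Rightarrow> real) \<Rightarrow> real \<times> (real^'n) \<Rightarrow> real" where
  "pdx i f z = frechet_derivative (\<lambda>y. f (fst z, y)) (at (snd z)) (axis i 1)"

definition grad_norm2 :: "(real \<times> (real^'n::finite) \<Rightarrow> real) \<Rightarrow> real \<times> (real^'n) \<Rightarrow> real" where
  "grad_norm2 f z = (\<Sum>i\<in>UNIV. (pdx i f z)\<^sup>2)"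

definition jac_norm2 :: "('n::finite \<Rightarrow> real \<times> (real^'n) \<Rightarrow> real) \<Rightarrow> real \<times> (real^'n) \<Rightarrow> real" where
  "jac_norm2 F z = (\<Sum>i\<in>UNIV. \<Sum>j\<in>UNIV. (pdx j (F i) z)\<^sup>2)"

definition hess_norm2 :: "(real \<times> (real^'n::finite) \<Rightarrow> real) \<Rightarrow> real \<times> (real^'n) \<Rightarrow> real" where
  "hess_norm2 f z = jac_norm2 (\<lambda>i. pdx i f) z"

text \<open>(0,T) x fundamental cell of the torus\<close>
definition cyl :: "real \<Rightarrow> (real \<times> (real^'n::finite)) set" where
  "cyl T = {0<..<T} \<times> cbox 0 One"

definition hyps5p1 :: "real \<Rightarrow> real \<Rightarrow> (real \<times> (real^'n::finite) \<Rightarrow> real) \<Rightarrow> (real \<Rightarrow> real) \<Rightarrow> (real \<Rightarrow> real) \<Rightarrow> bool" where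
  "hyps5p1 C0 T \<rho> h \<phi> \<longleftrightarrow>
     C_inf_on ({0<..<T} \<times> UNIV) \<rho> \<and> periodic_x \<rho> \<and>
     (\<forall>z \<in> {0<..<T} \<times> UNIV. \<rho> z > 0) \<and>
     smooth_pos h \<and>
     (\<forall>s>0. h s \<ge> 0 \<and> deriv h s > 0 \<and> deriv h s * s \<le> C0 * h s \<and>
             \<bar>deriv (deriv h) s\<bar> * s \<le> C0 * deriv h s) \<and>
     (\<forall>s>0. (\<phi> has_real_derivative (deriv h s / s)) (at s))"

end

theory Submission
  imports Defs
begin


lemma periodic_cube_shift:
  fixes G :: "'a::euclidean_space \<Rightarrow> real"
  assumes cG: "continuous_on UNIV G" and e: "e \<in> Basis" and per: "\<forall>x. G (x + e) = G x"
    and s: "0 \<le> s" "s \<le> 1"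
  shows "integral (cbox 0 One) (\<lambda>x. G (x + s *\<^sub>R e)) = integral (cbox 0 One) G"
proof -
  have int: "\<And>a b. G integrable_on cbox a b"
    by (rule integrable_continuous, rule continuous_on_subset[OF cG]) auto
  have sh: "\<And>c a b. integral (cbox a b) (\<lambda>x. G (x + c)) = integral (cbox (a + c) (b + c)) G"
  proof -
    fix c a b :: 'a
    have "(G has_integral integral (cbox (a + c) (b + c)) G) (cbox (a + c) (b + c))"
      using int by (simp add: has_integral_integral)
    then have "((G \<circ> (+) c) has_integral integral (cbox (a + c) (b + c)) G) (cbox a b)"
      using has_integral_shift_cbox_iff by blast
    then show "integral (cbox a b) (\<lambda>x. G (x + c)) = integral (cbox (a + c) (b + c)) G"
      by (simp add: o_def add.commute integral_unique)
  qed
  define B where "B = cbox (s *\<^sub>R e) (One + s *\<^sub>R e)"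
  have 1: "integral (cbox 0 One) (\<lambda>x. G (x + s *\<^sub>R e)) = integral B G"
    using sh[of 0 One "s *\<^sub>R e"] by (simp add: B_def)
  have 2: "integral B G = integral (B \<inter> {x. x \<bullet> e \<le> 1}) G + integral (B \<inter> {x. x \<bullet> e \<ge> 1}) G"
    unfolding B_def by (rule integral_split[OF int e])
  have 3: "integral (cbox 0 One) G = integral (cbox 0 One \<inter> {x. x \<bullet> e \<le> s}) G + integral (cbox 0 One \<inter> {x. x \<bullet> e \<ge> s}) G"
    by (rule integral_split[OF int e])
  have ie: "\<And>i. i \<in> Basis \<Longrightarrow> e \<bullet> i = (if i = e then 1 else 0)"
    using e by (simp add: inner_Basis)
  have bc: "\<And>x a b. x \<in> cbox a b \<longleftrightarrow> (a \<bullet> e \<le> x \<bullet> e \<and> x \<bullet> e \<le> b \<bullet> e) \<and> (\<forall>i\<in>Basis-{e}. a \<bullet> i \<le> x \<bullet> i \<and> x \<bullet> i \<le> b \<bullet> i)"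
    using e by (auto simp: mem_box)
  have s4: "B \<inter> {x. x \<bullet> e \<le> 1} = cbox 0 One \<inter> {x. x \<bullet> e \<ge> s}"
    unfolding B_def set_eq_iff Int_iff bc using s e by (simp add: inner_add_left ie) auto
  have s5: "B \<inter> {x. x \<bullet> e \<ge> 1} = cbox (0 + e) ((One - (1 - s) *\<^sub>R e) + e)"
    unfolding B_def set_eq_iff Int_iff bc using s e by (simp add: inner_add_left inner_diff_left ie) auto
  have s6: "cbox 0 One \<inter> {x. x \<bullet> e \<le> s} = cbox 0 (One - (1 - s) *\<^sub>R e)"
    unfolding set_eq_iff Int_iff bc using s e by (simp add: inner_add_left inner_diff_left ie) auto
  have 7: "integral (cbox (0 + e) ((One - (1 - s) *\<^sub>R e) + e)) G = integral (cbox 0 (One - (1 - s) *\<^sub>R e)) G"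
    using sh[of 0 "One - (1 - s) *\<^sub>R e" e] per by simp
  show ?thesis using 1 2 3 s4 s5 s6 7 by simp
qed

lemma div_zero:
  fixes G G' :: "'a::euclidean_space \<Rightarrow> real"
  assumes cG: "continuous_on UNIV G" and cG': "continuous_on UNIV G'" and e: "e \<in> Basis"
    and per: "\<forall>x. G (x + e) = G x"
    and der: "\<And>x. ((\<lambda>s. G (x + s *\<^sub>R e)) has_real_derivative G' x) (at 0)"
  shows "integral (cbox 0 One) G' = 0"
proof -
  define \<Psi> where "\<Psi> s = integral (cbox 0 One) (\<lambda>x. G (x + s *\<^sub>R e))" for s
  have c0: "\<Psi> s = \<Psi> 0" if "0 \<le> s" "s \<le> 1" for s
    using periodic_cube_shift[OF cG e per that] by (simp add: \<Psi>_def)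
  have cst: "\<Psi> s = \<Psi> 0" if "s \<in> {-1..1}" for s
  proof (cases "0 \<le> s")
    case True then show ?thesis using that by (intro c0) auto
  next
    case False
    have "\<Psi> s = \<Psi> (s + 1)"
      unfolding \<Psi>_def
    proof (rule integral_cong)
      fix x
      show "G (x + s *\<^sub>R e) = G (x + (s + 1) *\<^sub>R e)"
        using per[rule_format, of "x + s *\<^sub>R e"] by (simp add: scaleR_add_left add.assoc)
    qed
    also have "\<dots> = \<Psi> 0" using False that by (intro c0) auto
    finally show ?thesis .
  qed
  have der': "((\<lambda>s. G (x + s *\<^sub>R e)) has_real_derivative G' (x + s *\<^sub>R e)) (at s)" for x s
  proof -
    have "((\<lambda>\<sigma>. G ((x + s *\<^sub>R e) + \<sigma> *\<^sub>R e)) has_real_derivative G' (x + s *\<^sub>R e)) (at 0)"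
      by (rule der)
    then have "((\<lambda>\<sigma>. G (x + (\<sigma> + s) *\<^sub>R e)) has_real_derivative G' (x + s *\<^sub>R e)) (at 0)"
      by (simp add: scaleR_add_left algebra_simps)
    then show ?thesis
      using DERIV_shift[of "\<lambda>\<sigma>. G (x + \<sigma> *\<^sub>R e)" "G' (x + s *\<^sub>R e)" 0 s] by simp
  qed
  have contc: "continuous_on A (\<lambda>(s, x). H (x + s *\<^sub>R e))" if "continuous_on UNIV H" for A and H :: "'a \<Rightarrow> real"
  proof -
    have "continuous_on A (\<lambda>z. H (snd z + fst z *\<^sub>R e))"
      by (rule continuous_on_compose2[OF that]) (auto intro!: continuous_intros)
    then show ?thesis by (simp add: case_prod_beta)
  qed
  have L: "(\<Psi> has_field_derivative integral (cbox 0 One) (\<lambda>x. G' (x + 0 *\<^sub>R e))) (at 0 within {-1..1})"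
    unfolding \<Psi>_def
  proof (rule leibniz_rule_field_derivative[where fx="\<lambda>s x. G' (x + s *\<^sub>R e)"])
    show "((\<lambda>s. G (x + s *\<^sub>R e)) has_field_derivative G' (x + s *\<^sub>R e)) (at s within {-1..1})" for s x
      using der' has_field_derivative_at_within by blast
    show "(\<lambda>x. G (x + s *\<^sub>R e)) integrable_on cbox 0 One" for s
      by (rule integrable_continuous, rule continuous_on_compose2[OF cG]) (auto intro!: continuous_intros)
    show "continuous_on ({-1..1} \<times> cbox 0 One) (\<lambda>(s, x). G' (x + s *\<^sub>R e))"
      by (rule contc[OF cG'])
  qed auto
  have L0: "(\<Psi> has_field_derivative 0) (at 0 within {-1..1})"
  proof (rule has_field_derivative_transform_within[where f="\<lambda>_. \<Psi> 0" and d=1])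
    show "((\<lambda>_. \<Psi> 0) has_field_derivative 0) (at 0 within {-1..1})" by (rule DERIV_const)
  qed (auto intro!: cst[symmetric])
  have "at (0::real) within {-1..1} = at 0" by (rule at_within_Icc_at) auto
  with L L0 have "integral (cbox 0 One) (\<lambda>x. G' (x + 0 *\<^sub>R e)) = 0"
    using DERIV_unique by metis
  then show ?thesis by simp
qed



definition sd :: "(real \<times> (real^'n::finite) \<Rightarrow> real) \<Rightarrow> real \<times> (real^'n) \<Rightarrow> bool" where
  "sd f z \<longleftrightarrow> (\<lambda>y. f (fst z, y)) differentiable (at (snd z))"

lemma pdx_hasD:
  assumes "((\<lambda>y. f (fst z, y)) has_derivative D) (at (snd z))"
  shows "pdx i f z = D (axis i 1)"
  using assms unfolding pdx_def by (metis frechet_derivative_at)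

lemma sdE:
  assumes "sd f z"
  obtains D where "((\<lambda>y. f (fst z, y)) has_derivative D) (at (snd z))"
  using assms unfolding sd_def differentiable_def by blast

lemma sdI:
  assumes "((\<lambda>y. f (fst z, y)) has_derivative D) (at (snd z))"
  shows "sd f z"
  using assms unfolding sd_def differentiable_def by blast

lemma pdx_cong:
  assumes "\<And>y. f (fst z, y) = g (fst z, y)"
  shows "pdx i f z = pdx i g z"
  using assms unfolding pdx_def by simp

lemma sd_cong:
  assumes "\<And>y. f (fst z, y) = g (fst z, y)"
  shows "sd f z = sd g z"
  using assms unfolding sd_def by simp

lemma sd_const: "sd (\<lambda>w. c) z"
  by (rule sdI[where D="\<lambda>_. 0"]) simp

lemma pdx_const: "pdx i (\<lambda>w. c) z = 0"
  by (rule pdx_hasD[where D="\<lambda>_. 0", simplified]) simp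

lemma sd_add: "sd f z \<Longrightarrow> sd g z \<Longrightarrow> sd (\<lambda>w. f w + g w) z"
  by (elim sdE, rule sdI, rule has_derivative_add)

lemma pdx_add: "sd f z \<Longrightarrow> sd g z \<Longrightarrow> pdx i (\<lambda>w. f w + g w) z = pdx i f z + pdx i g z"
proof (elim sdE)
  fix Df Dg
  assume Df: "((\<lambda>y. f (fst z, y)) has_derivative Df) (at (snd z))"
     and Dg: "((\<lambda>y. g (fst z, y)) has_derivative Dg) (at (snd z))"
  show ?thesis
    using pdx_hasD[OF has_derivative_add[OF Df Dg]] pdx_hasD[OF Df] pdx_hasD[OF Dg] by simp
qed

lemma sd_mult: "sd f z \<Longrightarrow> sd g z \<Longrightarrow> sd (\<lambda>w. f w * g w) z"
  by (elim sdE, rule sdI, rule has_derivative_mult)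

lemma pdx_mult: "sd f z \<Longrightarrow> sd g z \<Longrightarrow> pdx i (\<lambda>w. f w * g w) z = pdx i f z * g z + f z * pdx i g z"
proof (elim sdE)
  fix Df Dg
  assume Df: "((\<lambda>y. f (fst z, y)) has_derivative Df) (at (snd z))"
     and Dg: "((\<lambda>y. g (fst z, y)) has_derivative Dg) (at (snd z))"
  have "pdx i (\<lambda>w. f w * g w) z = f (fst z, snd z) * Dg (axis i 1) + Df (axis i 1) * g (fst z, snd z)"
    using pdx_hasD[OF has_derivative_mult[OF Df Dg]] by simp
  then show ?thesis using pdx_hasD[OF Df] pdx_hasD[OF Dg] by simp
qed

lemma sd_comp:
  assumes "sd f z" "(k has_real_derivative k') (at (f z))"
  shows "sd (\<lambda>w. k (f w)) z"
proof -
  obtain Df where Df: "((\<lambda>y. f (fst z, y)) has_derivative Df) (at (snd z))" using assms(1) sdE by blast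
  have k: "(k has_derivative (*) k') (at (f (fst z, snd z)))"
    using assms(2) by (simp add: has_field_derivative_def)
  show ?thesis by (rule sdI, rule has_derivative_compose[OF Df k])
qed

lemma pdx_comp:
  assumes "sd f z" "(k has_real_derivative k') (at (f z))"
  shows "pdx i (\<lambda>w. k (f w)) z = k' * pdx i f z"
proof -
  obtain Df where Df: "((\<lambda>y. f (fst z, y)) has_derivative Df) (at (snd z))" using assms(1) sdE by blast
  have k: "(k has_derivative (*) k') (at (f (fst z, snd z)))"
    using assms(2) by (simp add: has_field_derivative_def)
  show ?thesis using pdx_hasD[OF has_derivative_compose[OF Df k]] pdx_hasD[OF Df] by simp
qed

lemma sd_inverse:
  assumes "sd f z" "f z \<noteq> 0"
  shows "sd (\<lambda>w. inverse (f w)) z"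
  using sd_comp[OF assms(1) DERIV_inverse[of "f z"]] assms(2) by simp

lemma pdx_inverse:
  assumes "sd f z" "f z \<noteq> 0"
  shows "pdx i (\<lambda>w. inverse (f w)) z = - pdx i f z / (f z)^2"
proof -
  have "pdx i (\<lambda>w. inverse (f w)) z = - (inverse (f z) ^ Suc (Suc 0)) * pdx i f z"
    using pdx_comp[OF assms(1) DERIV_inverse[of "f z"]] assms(2) by simp
  also have "\<dots> = - pdx i f z / (f z)^2"
    by (simp add: power_inverse divide_inverse_commute power2_eq_square)
  finally show ?thesis .
qed

lemma sd_divide:
  assumes "sd f z" "sd g z" "g z \<noteq> 0"
  shows "sd (\<lambda>w. f w / g w) z"
  using sd_mult[OF assms(1) sd_inverse[OF assms(2,3)]] by (simp add: divide_inverse)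

lemma pdx_divide:
  assumes "sd f z" "sd g z" "g z \<noteq> 0"
  shows "pdx i (\<lambda>w. f w / g w) z = (pdx i f z * g z - f z * pdx i g z) / (g z)^2"
proof -
  have e: "(\<lambda>w. f w / g w) = (\<lambda>w. f w * inverse (g w))" by (simp add: divide_inverse)
  have "pdx i (\<lambda>w. f w / g w) z = pdx i f z * inverse (g z) + f z * (- pdx i g z / (g z)^2)"
    unfolding e using pdx_mult[OF assms(1) sd_inverse[OF assms(2,3)], of i] pdx_inverse[OF assms(2,3), of i]
    by simp
  also have "\<dots> = (pdx i f z * g z - f z * pdx i g z) / (g z)^2"
    using assms(3) by (simp add: field_simps power2_eq_square)
  finally show ?thesis .
qed

lemma sd_sum: "finite A \<Longrightarrow> (\<And>j. j \<in> A \<Longrightarrow> sd (F j) z) \<Longrightarrow> sd (\<lambda>w. \<Sum>j\<in>A. F j w) z"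
  by (induction A rule: finite_induct) (auto intro: sd_add sd_const)

lemma pdx_sum: "finite A \<Longrightarrow> (\<And>j. j \<in> A \<Longrightarrow> sd (F j) z) \<Longrightarrow> pdx i (\<lambda>w. \<Sum>j\<in>A. F j w) z = (\<Sum>j\<in>A. pdx i (F j) z)"
proof (induction A rule: finite_induct)
  case empty then show ?case by (simp add: pdx_const)
next
  case (insert a A)
  have "pdx i (\<lambda>w. \<Sum>j\<in>insert a A. F j w) z = pdx i (\<lambda>w. F a w + (\<Sum>j\<in>A. F j w)) z"
    using insert by simp
  also have "\<dots> = pdx i (F a) z + pdx i (\<lambda>w. \<Sum>j\<in>A. F j w) z"
    using insert by (intro pdx_add sd_sum) auto
  finally show ?case using insert by simp
qed

lemma sd_line:
  assumes "sd f z"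
  shows "((\<lambda>s. f (fst z, snd z + s *\<^sub>R axis i 1)) has_real_derivative pdx i f z) (at 0)"
proof -
  obtain Df where Df: "((\<lambda>y. f (fst z, y)) has_derivative Df) (at (snd z))" using assms(1) sdE by blast
  have l: "((\<lambda>s::real. snd z + s *\<^sub>R axis i 1) has_derivative (\<lambda>s. s *\<^sub>R axis i 1)) (at 0)"
    by (auto intro!: derivative_eq_intros)
  have "((\<lambda>s. f (fst z, snd z + s *\<^sub>R axis i 1)) has_derivative (\<lambda>s. Df (s *\<^sub>R axis i 1))) (at 0)"
    using has_derivative_compose[OF l, of "\<lambda>y. f (fst z, y)" Df] Df by simp
  moreover have "Df (s *\<^sub>R axis i 1) = s * pdx i f z" for s
    using pdx_hasD[OF Df] has_derivative_linear[OF Df] by (simp add: linear_scale)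
  moreover have "(\<lambda>s. s * pdx i f z) = (*) (pdx i f z)" by (auto simp: fun_eq_iff)
  ultimately show ?thesis by (simp add: has_field_derivative_def)
qed

lemma joint_sd:
  assumes "f differentiable (at z)"
  shows "sd f z" "pdx i f z = frechet_derivative f (at z) (0, axis i 1)"
proof -
  have D: "(f has_derivative frechet_derivative f (at z)) (at (fst z, snd z))"
    using assms frechet_derivative_works[of f "at z"] by simp
  have p: "((\<lambda>y. (fst z, y)) has_derivative (\<lambda>v. (0, v))) (at (snd z))"
    by (auto intro!: derivative_eq_intros)
  have "((\<lambda>y. f (fst z, y)) has_derivative (\<lambda>v. frechet_derivative f (at z) (0, v))) (at (snd z))"
    using has_derivative_compose[OF p D] by simp
  then show "sd f z" "pdx i f z = frechet_derivative f (at z) (0, axis i 1)"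
    using sdI pdx_hasD by blast+
qed




lemma frechet_periodic:
  assumes per: "\<And>w. f (w + c) = f w" and d: "f differentiable (at (z + c))"
  shows "frechet_derivative f (at z) = frechet_derivative f (at (z + c))"
proof -
  have D: "(f has_derivative frechet_derivative f (at (z + c))) (at (z + c))"
    using d frechet_derivative_works by blast
  have s: "((\<lambda>w. w + c) has_derivative (\<lambda>x. x)) (at z)"
    by (auto intro!: derivative_eq_intros)
  have "((\<lambda>w. f (w + c)) has_derivative frechet_derivative f (at (z + c))) (at z)"
    using has_derivative_compose[OF s D] by simp
  then have "(f has_derivative frechet_derivative f (at (z + c))) (at z)"
    using per by simp
  then show ?thesis by (metis frechet_derivative_at)
qed

locale S5 =
  fixes C0 T :: real and \<rho> :: "real \<times> (real^'n::finite) \<Rightarrow> real" and h \<phi> :: "real \<Rightarrow> real"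
  assumes H: "hyps5p1 C0 T \<rho> h \<phi>"
begin

definition "U = {0<..<T} \<times> (UNIV :: (real^'n) set)"
definition E :: "'n \<Rightarrow> real \<times> (real^'n)" where "E i = (0, axis i 1)"
definition "r1 i = iter_dd [E i] \<rho>"
definition "r2 i j = iter_dd [E j, E i] \<rho>"

lemma U_open: "open U" unfolding U_def by (intro open_Times) auto

lemma U_slice: "z \<in> U \<Longrightarrow> (fst z, y) \<in> U"
  by (auto simp: U_def)

lemma U_shift: "z \<in> U \<Longrightarrow> z + E i \<in> U"
  by (auto simp: U_def E_def)

lemma E_Basis: "E i \<in> Basis"
  by (auto simp: E_def Basis_prod_def)

lemma rho_pos: "z \<in> U \<Longrightarrow> \<rho> z > 0"
  using H by (auto simp: hyps5p1_def U_def)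

lemma iter_diff: "set vs \<subseteq> Basis \<Longrightarrow> z \<in> U \<Longrightarrow> iter_dd vs \<rho> differentiable (at z)"
proof -
  assume "set vs \<subseteq> Basis" "z \<in> U"
  then have "iter_dd vs \<rho> differentiable_on U"
    using H by (auto simp: hyps5p1_def C_inf_on_def U_def)
  then show ?thesis using \<open>z \<in> U\<close> U_open by (simp add: differentiable_on_eq_differentiable_at)
qed

lemma iter_cont: "set vs \<subseteq> Basis \<Longrightarrow> continuous_on U (iter_dd vs \<rho>)"
  using iter_diff U_open
  by (meson continuous_at_imp_continuous_on differentiable_imp_continuous_within)

lemma rho_diff: "z \<in> U \<Longrightarrow> \<rho> differentiable (at z)"
  using iter_diff[of "[]"] by simp
lemma r1_diff: "z \<in> U \<Longrightarrow> r1 i differentiable (at z)"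
  using iter_diff[of "[E i]"] E_Basis by (simp add: r1_def)
lemma rho_cont: "continuous_on U \<rho>"
  using iter_cont[of "[]"] by simp
lemma r1_cont: "continuous_on U (r1 i)"
  using iter_cont[of "[E i]"] E_Basis by (simp add: r1_def)
lemma r2_cont: "continuous_on U (r2 i j)"
  using iter_cont[of "[E j, E i]"] E_Basis by (simp add: r2_def)

lemma sd_rho: "z \<in> U \<Longrightarrow> sd \<rho> z" using joint_sd rho_diff by blast
lemma pdx_rho: "z \<in> U \<Longrightarrow> pdx i \<rho> z = r1 i z"
  using joint_sd(2)[OF rho_diff] by (simp add: r1_def E_def)
lemma sd_r1: "z \<in> U \<Longrightarrow> sd (r1 i) z" using joint_sd r1_diff by blast
lemma pdx_r1: "z \<in> U \<Longrightarrow> pdx j (r1 i) z = r2 i j z"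
  using joint_sd(2)[OF r1_diff] by (simp add: r1_def r2_def E_def)

lemma rho_per: "\<rho> (w + E i) = \<rho> w"
  using H by (cases w) (auto simp: hyps5p1_def periodic_x_def E_def)

lemma r1_per: "z \<in> U \<Longrightarrow> r1 j (z + E i) = r1 j z"
  unfolding r1_def using frechet_periodic[OF rho_per rho_diff[OF U_shift]] by simp

lemma h_smooth: "(deriv ^^ k) h differentiable_on {0<..}"
  using H by (auto simp: hyps5p1_def smooth_pos_def)

lemma h_der: "s > 0 \<Longrightarrow> (h has_real_derivative deriv h s) (at s)"
  using h_smooth[of 0] by (simp add: differentiable_on_eq_differentiable_at DERIV_deriv_iff_real_differentiable)
lemma h1_der: "s > 0 \<Longrightarrow> (deriv h has_real_derivative deriv (deriv h) s) (at s)"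
  using h_smooth[of 1] by (simp add: differentiable_on_eq_differentiable_at DERIV_deriv_iff_real_differentiable)
lemma h2_diff: "s > 0 \<Longrightarrow> deriv (deriv h) differentiable (at s)"
  using h_smooth[of 2] by (simp add: differentiable_on_eq_differentiable_at numeral_2_eq_2)

lemma h_cont: "continuous_on {0<..} h"
  using h_der by (meson DERIV_isCont continuous_at_imp_continuous_on greaterThan_iff)
lemma h1_cont: "continuous_on {0<..} (deriv h)"
  using h1_der by (meson DERIV_isCont continuous_at_imp_continuous_on greaterThan_iff)
lemma h2_cont: "continuous_on {0<..} (deriv (deriv h))"
  using h2_diff by (meson differentiable_imp_continuous_within continuous_at_imp_continuous_on greaterThan_iff)

lemma h_props: "s > 0 \<Longrightarrow> h s \<ge> 0 \<and> deriv h s > 0 \<and> deriv h s * s \<le> C0 * h s \<and>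
             \<bar>deriv (deriv h) s\<bar> * s \<le> C0 * deriv h s"
  using H by (auto simp: hyps5p1_def)

lemma phi_der: "s > 0 \<Longrightarrow> (\<phi> has_real_derivative (deriv h s / s)) (at s)"
  using H by (auto simp: hyps5p1_def)

lemma C0_pos: "C0 > 0"
proof -
  have "deriv h 1 * 1 \<le> C0 * h 1" "deriv h 1 > 0" "h 1 \<ge> 0" using h_props[of 1] by auto
  then show ?thesis by (smt (verit) mult_nonpos_nonneg)
qed

lemma cont_comp_pos: "continuous_on {0<..} k \<Longrightarrow> continuous_on U (\<lambda>z. k (\<rho> z))"
  by (rule continuous_on_compose2[OF _ rho_cont]) (auto dest: rho_pos)

end



lemma sqid:
  fixes D :: "'n::finite \<Rightarrow> 'n \<Rightarrow> real" and g :: "'n \<Rightarrow> real"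
  shows "(\<Sum>i\<in>UNIV. \<Sum>j\<in>UNIV. (x * D i j - y * (g i * g j) - (if i = j then z else 0))^2)
    = x^2 * (\<Sum>i\<in>UNIV. \<Sum>j\<in>UNIV. (D i j)^2) + y^2 * (\<Sum>i\<in>UNIV. (g i)^2)^2
      - 2*x*y * (\<Sum>i\<in>UNIV. \<Sum>j\<in>UNIV. g i * D i j * g j) - 2*x*z*(\<Sum>j\<in>UNIV. D j j)
      + 2*y*z*(\<Sum>i\<in>UNIV. (g i)^2) + z^2 * real CARD('n)"
proof -
  have e: "(x * D i j - y * (g i * g j) - (if i = j then z else 0))^2 =
     x^2 * (D i j)^2 + y^2 * ((g i)^2 * (g j)^2) - 2*x*y * (g i * D i j * g j)
     - (if i = j then 2*x*z * D j j else 0) + (if i = j then 2*y*z*(g i)^2 else 0)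
     + (if i = j then z^2 else 0)" for i j
    by (cases "i = j") (simp_all add: power2_eq_square algebra_simps)
  have s1: "(\<Sum>i\<in>UNIV. (g i)^2 * (\<Sum>j\<in>UNIV. (g j)^2)) = (\<Sum>i\<in>UNIV. (g i)^2)^2"
    by (simp add: power2_eq_square[of "sum _ _"] sum_distrib_right)
  show ?thesis
    unfolding e
    by (simp add: sum.distrib sum_subtractf sum_distrib_left[symmetric] s1 sum.If_cases)
qed

lemma qf:
  fixes N P t G k d :: real
  assumes G: "G > 0" and d: "d \<le> 3" "0 \<le> d"
    and A: "0 \<le> G^4*N - G^2*(P + 5/27*k*G^2)^2 + 2*(5/27)*k*G^5*t + (5/27)^2*k^2*G^6*d"
  shows "0 \<le> 9/10*N - 4/3*k*P + 1/3*k*G*t + 17/30*k^2*G^2"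
proof -
  define X where "X = P + 5/27*k*G^2"
  define Y where "Y = k*G^2"
  define c where "c = 4/3*(5/27) + 17/30 - 9/10*(5/27)^2*d"
  have c: "c - 360/729 \<ge> 0" using d unfolding c_def by (simp add: power2_eq_square)
  have B: "0 \<le> 9/10*X^2 - 4/3*X*Y + c*Y^2"
  proof -
    have "9/10*X^2 - 4/3*X*Y + c*Y^2 = 9/10*(X - 20/27*Y)^2 + (c - 360/729)*Y^2"
      by (simp add: power2_eq_square algebra_simps)
    also have "\<dots> \<ge> 0" using c by (intro add_nonneg_nonneg mult_nonneg_nonneg) auto
    finally show ?thesis by simp
  qed
  have C: "G^4 * (9/10*N - 4/3*k*P + 1/3*k*G*t + 17/30*k^2*G^2) =
     9/10 * (G^4*N - G^2*(P + 5/27*k*G^2)^2 + 2*(5/27)*k*G^5*t + (5/27)^2*k^2*G^6*d)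
     + G^2 * (9/10*X^2 - 4/3*X*Y + c*Y^2)"
    unfolding X_def Y_def c_def by algebra
  have "0 \<le> G^4 * (9/10*N - 4/3*k*P + 1/3*k*G*t + 17/30*k^2*G^2)"
    unfolding C by (rule add_nonneg_nonneg[OF mult_nonneg_nonneg[OF _ A] mult_nonneg_nonneg[OF _ B]]) simp_all
  then show ?thesis using G by (simp add: zero_le_mult_iff)
qed


lemma pw1:
  fixes D :: "'n::finite \<Rightarrow> 'n \<Rightarrow> real" and g :: "'n \<Rightarrow> real" and a u :: real
  assumes a: "a > 0" and u: "u > 0" and card: "CARD('n) \<le> 3"
  shows "(a * (\<Sum>i\<in>UNIV. \<Sum>j\<in>UNIV. (D i j)^2) + a^3 * (\<Sum>i\<in>UNIV. (g i)^2)^2 / u^2) / 10 \<le>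
      a * (\<Sum>i\<in>UNIV. \<Sum>j\<in>UNIV. (D i j - (a * g i) * g j / u)^2)
    + 1/3 * (\<Sum>j\<in>UNIV. (((\<Sum>i\<in>UNIV. D i j * (a * g i) + (a * g i) * D i j) * (a * g j)
          + (\<Sum>i\<in>UNIV. (a * g i) * (a * g i)) * D j j) * u
          - (\<Sum>i\<in>UNIV. (a * g i) * (a * g i)) * (a * g j) * g j) / u^2)"
proof -
  define N where "N = (\<Sum>i\<in>UNIV. \<Sum>j\<in>UNIV. (D i j)^2)"
  define P where "P = (\<Sum>i\<in>UNIV. \<Sum>j\<in>UNIV. g i * D i j * g j)"
  define t where "t = (\<Sum>j\<in>UNIV. D j j)"
  define G where "G = (\<Sum>i\<in>UNIV. (g i)^2)"
  define k where "k = a / u"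
  define d where "d = real CARD('n)"
  have G0: "G \<ge> 0" unfolding G_def by (simp add: sum_nonneg)
  have R: "(\<Sum>i\<in>UNIV. \<Sum>j\<in>UNIV. (D i j - (a * g i) * g j / u)^2) = N + k^2 * G^2 - 2 * k * P"
  proof -
    have "(\<Sum>i\<in>UNIV. \<Sum>j\<in>UNIV. (D i j - (a * g i) * g j / u)^2) =
          (\<Sum>i\<in>UNIV. \<Sum>j\<in>UNIV. (1 * D i j - k * (g i * g j) - (if i = j then 0 else 0))^2)"
      unfolding k_def by (intro sum.cong refl) (simp add: algebra_simps)
    also have "\<dots> = N + k^2 * G^2 - 2 * k * P"
      unfolding sqid N_def G_def P_def by simp
    finally show ?thesis .
  qed
  have S: "(\<Sum>i\<in>UNIV. (a * g i) * (a * g i)) = a^2 * G"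
    unfolding G_def by (simp add: sum_distrib_left power2_eq_square algebra_simps)
  have Dv: "(\<Sum>j\<in>UNIV. (((\<Sum>i\<in>UNIV. D i j * (a * g i) + (a * g i) * D i j) * (a * g j)
          + (\<Sum>i\<in>UNIV. (a * g i) * (a * g i)) * D j j) * u
          - (\<Sum>i\<in>UNIV. (a * g i) * (a * g i)) * (a * g j) * g j) / u^2)
        = a * (2 * k * P + k * G * t - k^2 * G^2)"
  proof -
    have 1: "(\<Sum>j\<in>UNIV. (\<Sum>i\<in>UNIV. D i j * (a * g i) + (a * g i) * D i j) * (a * g j)) = 2 * a^2 * P"
    proof -
      have "(\<Sum>j\<in>UNIV. (\<Sum>i\<in>UNIV. D i j * (a * g i) + (a * g i) * D i j) * (a * g j))
          = (\<Sum>j\<in>UNIV. \<Sum>i\<in>UNIV. 2 * a^2 * (g i * D i j * g j))"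
        by (intro sum.cong refl) (simp add: sum_distrib_left sum_distrib_right power2_eq_square algebra_simps)
      also have "\<dots> = 2 * a^2 * P"
        unfolding P_def by (subst sum.swap) (simp add: sum_distrib_left)
      finally show ?thesis .
    qed
    have 2: "(\<Sum>j\<in>UNIV. a^2 * G * D j j) = a^2 * G * t"
      unfolding t_def by (simp add: sum_distrib_left)
    have 3: "(\<Sum>j\<in>UNIV. a^2 * G * (a * g j) * g j) = a^3 * G^2"
      unfolding G_def by (simp add: sum_distrib_left power2_eq_square algebra_simps power3_eq_cube)
    have "(\<Sum>j\<in>UNIV. (((\<Sum>i\<in>UNIV. D i j * (a * g i) + (a * g i) * D i j) * (a * g j)
          + (\<Sum>i\<in>UNIV. (a * g i) * (a * g i)) * D j j) * u
          - (\<Sum>i\<in>UNIV. (a * g i) * (a * g i)) * (a * g j) * g j) / u^2)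
       = ((\<Sum>j\<in>UNIV. (\<Sum>i\<in>UNIV. D i j * (a * g i) + (a * g i) * D i j) * (a * g j)) * u
          + (\<Sum>j\<in>UNIV. a^2 * G * D j j) * u - (\<Sum>j\<in>UNIV. a^2 * G * (a * g j) * g j)) / u^2"
      unfolding S by (simp add: sum_divide_distrib[symmetric] sum.distrib sum_subtractf sum_distrib_right sum_distrib_left algebra_simps)
    also have "\<dots> = (2 * a^2 * P * u + a^2 * G * t * u - a^3 * G^2) / u^2"
      unfolding 1 2 3 by simp
    also have "\<dots> = a * (2 * k * P + k * G * t - k^2 * G^2)"
      unfolding k_def using u by (simp add: field_simps power2_eq_square power3_eq_cube)
    finally show ?thesis .
  qed
  have L: "a^3 * G^2 / u^2 = a * (k^2 * G^2)"
    unfolding k_def using u by (simp add: field_simps power2_eq_square power3_eq_cube)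
  have E: "0 \<le> 9/10*N - 4/3*k*P + 1/3*k*G*t + 17/30*k^2*G^2"
  proof (cases "G = 0")
    case True
    then have "\<forall>i. (g i)^2 = 0" unfolding G_def by (subst (asm) sum_nonneg_eq_0_iff) auto
    then have "P = 0" unfolding P_def by simp
    with True show ?thesis unfolding N_def by (simp add: sum_nonneg)
  next
    case False
    then have Gp: "G > 0" using G0 by simp
    have "0 \<le> (\<Sum>i\<in>UNIV. \<Sum>j\<in>UNIV. ((G^2) * D i j - (P + 5/27*k*G^2) * (g i * g j) - (if i = j then (-(5/27)*k*G^3) else 0))^2)"
      by (simp add: sum_nonneg)
    also have "\<dots> = G^4*N - G^2*(P + 5/27*k*G^2)^2 + 2*(5/27)*k*G^5*t + (5/27)^2*k^2*G^6*d"
      unfolding sqid N_def[symmetric] G_def[symmetric] P_def[symmetric] t_def[symmetric] d_def[symmetric]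
      by algebra
    finally have A: "0 \<le> G^4*N - G^2*(P + 5/27*k*G^2)^2 + 2*(5/27)*k*G^5*t + (5/27)^2*k^2*G^6*d" .
    show ?thesis by (rule qf[OF Gp _ _ A]) (use card in \<open>auto simp: d_def\<close>)
  qed
  have aE: "0 \<le> a * (9/10*N - 4/3*k*P + 1/3*k*G*t + 17/30*k^2*G^2)"
    using E a by simp
  have eq: "a * (N + k^2 * G^2 - 2 * k * P) + 1/3 * (a * (2 * k * P + k * G * t - k^2 * G^2))
      - (a * N + a * (k^2 * G^2)) / 10 = a * (9/10*N - 4/3*k*P + 1/3*k*G*t + 17/30*k^2*G^2)"
    by algebra
  show ?thesis
    unfolding Dv R N_def[symmetric] G_def[symmetric] L
    using aE eq by linarith
qed


lemma hu_bound:
  fixes a b c u C0 H D gi gj :: real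
  assumes c: "c > 0" "a \<ge> c" and u: "u > 0" and b: "\<bar>b\<bar> * u^2 \<le> C0 * a"
    and e: "a * H = D - 2*b*u*gj*gi"
  shows "H^2 \<le> 2 * D^2 / a^2 + 8 * C0^2 * (gi^2 * gj^2) / u^2"
proof -
  have a: "a > 0" using c by simp
  have H: "H = (D - 2*b*u*gj*gi) / a" using e a by (metis eq_divide_eq mult.commute order_less_irrefl)
  have b2: "b^2 * u^2 \<le> C0^2 * a^2 / u^2"
  proof -
    have "(\<bar>b\<bar> * u^2)^2 \<le> (C0 * a)^2"
      using b by (intro power_mono) auto
    then have "b^2 * u^4 \<le> C0^2 * a^2" by (simp add: power_mult_distrib power2_abs)
    then show ?thesis using u by (simp add: field_simps power2_eq_square power4_eq_xxxx)
  qed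
  have "H^2 = (D - 2*b*u*gj*gi)^2 / a^2" unfolding H by (simp add: power_divide)
  also have "\<dots> \<le> (2*D^2 + 2*(2*b*u*gj*gi)^2) / a^2"
  proof (intro divide_right_mono)
    show "(D - 2*b*u*gj*gi)^2 \<le> 2*D^2 + 2*(2*b*u*gj*gi)^2"
    proof -
      have "2*D^2 + 2*(2*b*u*gj*gi)^2 - (D - 2*b*u*gj*gi)^2 = (D + 2*b*u*gj*gi)^2" by algebra
      moreover have "(D + 2*b*u*gj*gi)^2 \<ge> 0" by simp
      ultimately show ?thesis by linarith
    qed
  qed simp
  also have "\<dots> = 2*D^2/a^2 + 8*(b^2*u^2)*(gi^2*gj^2)/a^2"
    by (simp add: power_mult_distrib add_divide_distrib algebra_simps)
  also have "\<dots> \<le> 2*D^2/a^2 + 8*(C0^2 * a^2 / u^2)*(gi^2*gj^2)/a^2"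
    using b2 by (intro add_left_mono divide_right_mono mult_right_mono mult_left_mono) auto
  also have "\<dots> = 2 * D^2 / a^2 + 8 * C0^2 * (gi^2 * gj^2) / u^2"
    using a u by (simp add: field_simps)
  finally show ?thesis .
qed

lemma pw2:
  fixes D H :: "'n::finite \<Rightarrow> 'n \<Rightarrow> real" and g :: "'n \<Rightarrow> real" and a b c u C0 :: real
  assumes c: "c > 0" "a \<ge> c" and u: "u > 0" and b: "\<bar>b\<bar> * u^2 \<le> C0 * a"
    and e: "\<And>i j. a * H i j = D i j - 2*b*u*g j*g i"
  shows "(\<Sum>i\<in>UNIV. \<Sum>j\<in>UNIV. (H i j)^2) + ((\<Sum>i\<in>UNIV. (g i)^2) / (4*u))^2
     \<le> (3 + 8*C0^2) / c^3 * (a * (\<Sum>i\<in>UNIV. \<Sum>j\<in>UNIV. (D i j)^2) + a^3 * (\<Sum>i\<in>UNIV. (g i)^2)^2 / u^2)"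
proof -
  define N where "N = (\<Sum>i\<in>UNIV. \<Sum>j\<in>UNIV. (D i j)^2)"
  define G where "G = (\<Sum>i\<in>UNIV. (g i)^2)"
  have a: "a > 0" using c by simp
  have N0: "N \<ge> 0" unfolding N_def by (simp add: sum_nonneg)
  have "(\<Sum>i\<in>UNIV. \<Sum>j\<in>UNIV. (H i j)^2) \<le> (\<Sum>i\<in>UNIV. \<Sum>j\<in>UNIV. 2 * (D i j)^2 / a^2 + 8 * C0^2 * ((g i)^2 * (g j)^2) / u^2)"
    by (intro sum_mono hu_bound[OF c u b e])
  also have "\<dots> = 2 * N / a^2 + 8 * C0^2 * G^2 / u^2"
    unfolding N_def G_def
    by (simp add: sum.distrib sum_divide_distrib[symmetric] sum_distrib_left[symmetric] sum_distrib_right[symmetric] power2_eq_square[of "sum _ _"])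
  finally have 1: "(\<Sum>i\<in>UNIV. \<Sum>j\<in>UNIV. (H i j)^2) \<le> 2 * N / a^2 + 8 * C0^2 * G^2 / u^2" .
  have 2: "(G / (4*u))^2 = G^2 / (16 * u^2)" by (simp add: power_divide power_mult_distrib)
  have c3: "c^3 \<le> a^3" using c by (intro power_mono) auto
  have c3p: "c^3 > 0" using c by simp
  have 3: "2 * N / a^2 \<le> 2 / c^3 * (a * N)"
  proof -
    have "2 * N / a^2 = 2 * N * a / a^3" using a by (simp add: field_simps power2_eq_square power3_eq_cube)
    also have "\<dots> \<le> 2 * N * a / c^3" using c3 c3p a N0 by (intro divide_left_mono) auto
    finally show ?thesis by (simp add: ac_simps)
  qed
  have 4: "8 * C0^2 * G^2 / u^2 + G^2 / (16 * u^2) \<le> (8*C0^2 + 1) / c^3 * (a^3 * G^2 / u^2)"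
  proof -
    have "8 * C0^2 * G^2 / u^2 + G^2 / (16 * u^2) \<le> (8*C0^2 + 1) * (G^2 / u^2)"
      using u by (simp add: field_simps)
    also have "\<dots> = (8*C0^2 + 1) / c^3 * (c^3 * G^2 / u^2)" using c3p by simp
    also have "\<dots> \<le> (8*C0^2 + 1) / c^3 * (a^3 * G^2 / u^2)"
      using c3 c3p u by (intro mult_left_mono divide_right_mono mult_right_mono) auto
    finally show ?thesis .
  qed
  have 5: "2 / c^3 * (a * N) \<le> (3 + 8*C0^2) / c^3 * (a * N)"
    using a N0 c3p by (intro mult_right_mono divide_right_mono) auto
  have 6: "(8*C0^2 + 1) / c^3 * (a^3 * G^2 / u^2) \<le> (3 + 8*C0^2) / c^3 * (a^3 * G^2 / u^2)"
    using a u c3p by (intro mult_right_mono divide_right_mono) auto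
  show ?thesis
    unfolding N_def[symmetric] G_def[symmetric] 2
  proof -
    have d: "(3 + 8*C0^2) / c^3 * (a * N + a^3 * G^2 / u^2) = (3 + 8*C0^2) / c^3 * (a * N) + (3 + 8*C0^2) / c^3 * (a^3 * G^2 / u^2)"
      by (rule distrib_left)
    show "(\<Sum>i\<in>UNIV. \<Sum>j\<in>UNIV. (H i j)\<^sup>2) + G\<^sup>2 / (16 * u\<^sup>2) \<le> (3 + 8 * C0\<^sup>2) / c ^ 3 * (a * N + a ^ 3 * G\<^sup>2 / u\<^sup>2)"
      unfolding d using 1 3 4 5 6 by linarith
  qed
qed




context S5 begin

definition "av z = deriv h (\<rho> z)"
definition "bv z = deriv (deriv h) (\<rho> z)"
definition "uv z = sqrt (\<rho> z)"
definition "gf i z = r1 i z / (2 * uv z)"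
definition "ww i z = av z * gf i z"
definition "Hu i j z = (r2 i j z * (2 * uv z) - r1 i z * (2 * gf j z)) / (2 * uv z)^2"
definition "Dd i j z = bv z * r1 j z * gf i z + av z * Hu i j z"
definition "Sw z = (\<Sum>i\<in>UNIV. ww i z * ww i z)"
definition "Fd j z = Sw z * ww j z / uv z"
definition "divF j z = (((\<Sum>i\<in>UNIV. Dd i j z * ww i z + ww i z * Dd i j z) * ww j z + Sw z * Dd j j z) * uv z - Sw z * ww j z * gf j z) / (uv z)^2"

lemma uv_pos: "z \<in> U \<Longrightarrow> uv z > 0"
  using rho_pos by (simp add: uv_def)

lemma uv_sq: "z \<in> U \<Longrightarrow> (uv z)^2 = \<rho> z"
  using rho_pos by (simp add: uv_def less_imp_le)

lemma sd_uv: "z \<in> U \<Longrightarrow> sd uv z"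
  unfolding uv_def[abs_def] using sd_comp[OF sd_rho DERIV_real_sqrt[OF rho_pos]] by blast

lemma pdx_uv: "z \<in> U \<Longrightarrow> pdx i uv z = gf i z"
proof -
  assume z: "z \<in> U"
  have "pdx i uv z = inverse (sqrt (\<rho> z)) / 2 * pdx i \<rho> z"
    unfolding uv_def[abs_def] using pdx_comp[OF sd_rho[OF z] DERIV_real_sqrt[OF rho_pos[OF z]]] by blast
  also have "\<dots> = r1 i z / (2 * uv z)"
  proof -
    have s: "sqrt (\<rho> z) > 0" using rho_pos[OF z] by simp
    show ?thesis unfolding pdx_rho[OF z] uv_def using s by (simp add: field_simps)
  qed
  finally show ?thesis by (simp add: gf_def)
qed

lemma sd_2uv: "z \<in> U \<Longrightarrow> sd (\<lambda>w. 2 * uv w) z"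
  using sd_mult[OF sd_const sd_uv] by blast

lemma pdx_2uv: "z \<in> U \<Longrightarrow> pdx j (\<lambda>w. 2 * uv w) z = 2 * gf j z"
proof -
  assume z: "z \<in> U"
  have "pdx j (\<lambda>w. 2 * uv w) z = pdx j (\<lambda>w. 2) z * uv z + 2 * pdx j uv z"
    by (rule pdx_mult[OF sd_const sd_uv[OF z]])
  then show ?thesis by (simp add: pdx_const pdx_uv[OF z])
qed

lemma gf_fun: "gf i = (\<lambda>w. r1 i w / (2 * uv w))" by (simp add: fun_eq_iff gf_def)

lemma sd_gf: "z \<in> U \<Longrightarrow> sd (gf i) z"
proof -
  assume z: "z \<in> U"
  have "2 * uv z \<noteq> 0" using uv_pos[OF z] by simp
  then show ?thesis unfolding gf_fun by (rule sd_divide[OF sd_r1[OF z] sd_2uv[OF z]])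
qed

lemma pdx_gf: "z \<in> U \<Longrightarrow> pdx j (gf i) z = Hu i j z"
proof -
  assume z: "z \<in> U"
  have "2 * uv z \<noteq> 0" using uv_pos[OF z] by simp
  then show ?thesis
    unfolding gf_fun using pdx_divide[OF sd_r1[OF z] sd_2uv[OF z], of j i]
    by (simp add: pdx_r1[OF z] pdx_2uv[OF z] Hu_def gf_def)
qed

lemma av_fun: "av = (\<lambda>w. deriv h (\<rho> w))" by (simp add: fun_eq_iff av_def)

lemma sd_av: "z \<in> U \<Longrightarrow> sd av z"
  unfolding av_fun using sd_comp[OF sd_rho h1_der[OF rho_pos]] by blast

lemma pdx_av: "z \<in> U \<Longrightarrow> pdx j av z = bv z * r1 j z"
  unfolding av_fun using pdx_comp[OF sd_rho h1_der[OF rho_pos]] by (simp add: pdx_rho bv_def)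

lemma ww_fun: "ww i = (\<lambda>w. av w * gf i w)" by (simp add: fun_eq_iff ww_def)

lemma sd_ww: "z \<in> U \<Longrightarrow> sd (ww i) z"
  unfolding ww_fun using sd_mult[OF sd_av sd_gf] by blast

lemma pdx_ww: "z \<in> U \<Longrightarrow> pdx j (ww i) z = Dd i j z"
  unfolding ww_fun using pdx_mult[OF sd_av sd_gf] by (simp add: pdx_av pdx_gf Dd_def)

lemma Sw_fun: "Sw = (\<lambda>w. \<Sum>i\<in>UNIV. ww i w * ww i w)" by (simp add: fun_eq_iff Sw_def)

lemma sd_Sw: "z \<in> U \<Longrightarrow> sd Sw z"
  unfolding Sw_fun by (rule sd_sum) (simp_all add: sd_mult sd_ww)

lemma pdx_Sw: "z \<in> U \<Longrightarrow> pdx j Sw z = (\<Sum>i\<in>UNIV. Dd i j z * ww i z + ww i z * Dd i j z)"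
proof -
  assume z: "z \<in> U"
  have "pdx j Sw z = (\<Sum>i\<in>UNIV. pdx j (\<lambda>w. ww i w * ww i w) z)"
    unfolding Sw_fun
    by (rule pdx_sum[where F="\<lambda>i w. ww i w * ww i w"]) (simp_all add: sd_mult sd_ww z)
  also have "\<dots> = (\<Sum>i\<in>UNIV. Dd i j z * ww i z + ww i z * Dd i j z)"
    by (rule sum.cong[OF refl]) (simp add: pdx_mult[OF sd_ww[OF z] sd_ww[OF z]] pdx_ww[OF z])
  finally show ?thesis .
qed
lemma Fd_fun: "Fd j = (\<lambda>w. (Sw w * ww j w) / uv w)" by (simp add: fun_eq_iff Fd_def)
lemma sd_Fd: "z \<in> U \<Longrightarrow> sd (Fd j) z"
proof -
  assume z: "z \<in> U"
  have "uv z \<noteq> 0" using uv_pos[OF z] by simp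
  then show ?thesis unfolding Fd_fun by (rule sd_divide[OF sd_mult[OF sd_Sw[OF z] sd_ww[OF z]] sd_uv[OF z]])
qed
lemma pdx_Fd: "z \<in> U \<Longrightarrow> pdx j (Fd j) z = divF j z"
proof -
  assume z: "z \<in> U"
  have nz: "uv z \<noteq> 0" using uv_pos[OF z] by simp
  have "pdx j (Fd j) z = (pdx j (\<lambda>w. Sw w * ww j w) z * uv z - (Sw z * ww j z) * pdx j uv z) / (uv z)^2"
    unfolding Fd_fun by (rule pdx_divide[OF sd_mult[OF sd_Sw[OF z] sd_ww[OF z]] sd_uv[OF z] nz])
  also have "\<dots> = ((pdx j Sw z * ww j z + Sw z * pdx j (ww j) z) * uv z - (Sw z * ww j z) * gf j z) / (uv z)^2"
    by (simp only: pdx_mult[OF sd_Sw[OF z] sd_ww[OF z]] pdx_uv[OF z])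
  also have "\<dots> = divF j z"
    by (simp only: pdx_Sw[OF z] pdx_ww[OF z] divF_def)
  finally show ?thesis .
qed

lemma uv_fun: "uv = (\<lambda>w. sqrt (\<rho> w))" by (simp add: fun_eq_iff uv_def)

lemma av_cont: "continuous_on U av" unfolding av_fun by (rule cont_comp_pos[OF h1_cont])
lemma bv_cont: "continuous_on U bv" unfolding bv_def[abs_def] by (rule cont_comp_pos[OF h2_cont])
lemma hr_cont: "continuous_on U (\<lambda>z. h (\<rho> z))" by (rule cont_comp_pos[OF h_cont])
lemma uv_cont: "continuous_on U uv" unfolding uv_fun by (intro continuous_intros rho_cont)

lemma gf_cont: "continuous_on U (gf i)"
  unfolding gf_fun by (intro continuous_intros r1_cont uv_cont) (use uv_pos in force)
lemma Hu_cont: "continuous_on U (Hu i j)"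
  unfolding Hu_def[abs_def] by (intro continuous_intros r1_cont r2_cont uv_cont gf_cont) (use uv_pos in force)
lemma Dd_cont: "continuous_on U (Dd i j)"
  unfolding Dd_def[abs_def] by (intro continuous_intros r1_cont bv_cont av_cont gf_cont Hu_cont)
lemma ww_cont: "continuous_on U (ww i)"
  unfolding ww_fun by (intro continuous_intros av_cont gf_cont)
lemma Sw_cont: "continuous_on U Sw"
  unfolding Sw_fun by (intro continuous_intros ww_cont)
lemma Fd_cont: "continuous_on U (Fd j)"
  unfolding Fd_fun by (intro continuous_intros Sw_cont ww_cont uv_cont) (use uv_pos in force)
lemma divF_cont: "continuous_on U (divF j)"
  unfolding divF_def[abs_def]
  by (intro continuous_intros Sw_cont ww_cont uv_cont Dd_cont gf_cont) (use uv_pos in force)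

lemma gf_per: "z \<in> U \<Longrightarrow> gf j (z + E i) = gf j z"
  by (simp add: gf_def uv_def rho_per r1_per)
lemma ww_per: "z \<in> U \<Longrightarrow> ww j (z + E i) = ww j z"
  by (simp add: ww_def av_def rho_per gf_per)
lemma Sw_per: "z \<in> U \<Longrightarrow> Sw (z + E i) = Sw z"
  by (simp add: Sw_def ww_per)
lemma Fd_per: "z \<in> U \<Longrightarrow> Fd j (z + E i) = Fd j z"
  by (simp add: Fd_def Sw_per ww_per uv_def rho_per)

lemma slice_cont: "continuous_on U f \<Longrightarrow> t \<in> {0<..<T} \<Longrightarrow> continuous_on UNIV (\<lambda>x. f (t, x))"
  by (rule continuous_on_compose2[where f="\<lambda>x. (t, x)"]) (auto intro!: continuous_intros simp: U_def)

lemma divF_int0: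
  assumes t: "t \<in> {0<..<T}"
  shows "integral (cbox 0 One) (\<lambda>x. divF j (t, x)) = 0"
proof (rule div_zero[where G="\<lambda>x. Fd j (t, x)" and e="axis j 1"])
  show "continuous_on UNIV (\<lambda>x. Fd j (t, x))" by (rule slice_cont[OF Fd_cont t])
  show "continuous_on UNIV (\<lambda>x. divF j (t, x))" by (rule slice_cont[OF divF_cont t])
  show "axis j 1 \<in> (Basis :: (real^'n) set)" by simp
  show "\<forall>x. Fd j (t, x + axis j 1) = Fd j (t, x)"
  proof
    fix x
    have z: "(t, x) \<in> U" using t by (simp add: U_def)
    show "Fd j (t, x + axis j 1) = Fd j (t, x)"
      using Fd_per[OF z, of j j] by (simp add: E_def)
  qed
  show "((\<lambda>s. Fd j (t, x + s *\<^sub>R axis j 1)) has_real_derivative divF j (t, x)) (at 0)" for x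
  proof -
    have z: "(t, x) \<in> U" using t by (simp add: U_def)
    show ?thesis using sd_line[OF sd_Fd[OF z, of j], where i=j] pdx_Fd[OF z, of j] by simp
  qed
qed

definition "Hphi i j z = ((0 * ww i z + 2 * Dd i j z) * uv z - 2 * ww i z * gf j z) / (uv z)^2"

lemma pdx_sqrt_stmt: "z \<in> U \<Longrightarrow> pdx i (\<lambda>y. sqrt (\<rho> y)) z = gf i z"
  using pdx_uv by (simp add: uv_fun)

lemma w_stmt: "z \<in> U \<Longrightarrow> pdx j (\<lambda>w. deriv h (\<rho> w) * pdx i (\<lambda>y. sqrt (\<rho> y)) w) z = Dd i j z"
proof -
  assume z: "z \<in> U"
  have "pdx j (\<lambda>w. deriv h (\<rho> w) * pdx i (\<lambda>y. sqrt (\<rho> y)) w) z = pdx j (ww i) z"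
    by (rule pdx_cong) (simp add: pdx_sqrt_stmt[OF U_slice[OF z]] ww_def av_def)
  then show ?thesis using pdx_ww[OF z] by simp
qed

lemma hess_sqrt_stmt: "z \<in> U \<Longrightarrow> pdx j (pdx i (\<lambda>y. sqrt (\<rho> y))) z = Hu i j z"
proof -
  assume z: "z \<in> U"
  have "pdx j (pdx i (\<lambda>y. sqrt (\<rho> y))) z = pdx j (gf i) z"
    by (rule pdx_cong) (simp add: pdx_sqrt_stmt[OF U_slice[OF z]])
  then show ?thesis using pdx_gf[OF z] by simp
qed

lemma pdx_phi: "w \<in> U \<Longrightarrow> pdx i (\<lambda>y. \<phi> (\<rho> y)) w = 2 * ww i w / uv w"
proof -
  assume w: "w \<in> U"
  have "pdx i (\<lambda>y. \<phi> (\<rho> y)) w = deriv h (\<rho> w) / \<rho> w * r1 i w"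
    using pdx_comp[OF sd_rho[OF w] phi_der[OF rho_pos[OF w]], of i] pdx_rho[OF w] by simp
  also have "\<dots> = 2 * ww i w / uv w"
    using uv_pos[OF w] uv_sq[OF w] unfolding ww_def av_def gf_def
    by (simp add: field_simps power2_eq_square)
  finally show ?thesis .
qed

lemma hess_phi_stmt: "z \<in> U \<Longrightarrow> pdx j (pdx i (\<lambda>y. \<phi> (\<rho> y))) z = Hphi i j z"
proof -
  assume z: "z \<in> U"
  have "pdx j (pdx i (\<lambda>y. \<phi> (\<rho> y))) z = pdx j (\<lambda>w. (2 * ww i w) / uv w) z"
    by (rule pdx_cong) (simp add: pdx_phi[OF U_slice[OF z]])
  also have "\<dots> = (pdx j (\<lambda>w. 2 * ww i w) z * uv z - (2 * ww i z) * pdx j uv z) / (uv z)^2"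
    by (rule pdx_divide[OF sd_mult[OF sd_const sd_ww[OF z]] sd_uv[OF z]]) (use uv_pos[OF z] in simp)
  also have "\<dots> = Hphi i j z"
    by (simp add: pdx_mult[OF sd_const sd_ww[OF z]] pdx_const pdx_ww[OF z] pdx_uv[OF z] Hphi_def)
  finally show ?thesis .
qed

lemma quarter_eq: "w \<in> U \<Longrightarrow> \<rho> w powr (1/4) = sqrt (uv w)"
proof -
  assume w: "w \<in> U"
  have p: "\<rho> w > 0" using rho_pos[OF w] .
  have "sqrt (uv w) = (\<rho> w powr (1/2)) powr (1/2)"
    using p by (simp add: uv_def powr_half_sqrt)
  also have "\<dots> = \<rho> w powr (1/4)" by (simp add: powr_powr)
  finally show ?thesis by simp
qed

lemma pdx_quarter: "z \<in> U \<Longrightarrow> (pdx i (\<lambda>y. \<rho> y powr (1/4)) z)^2 = (gf i z)^2 / (4 * uv z)"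
proof -
  assume z: "z \<in> U"
  have "pdx i (\<lambda>y. \<rho> y powr (1/4)) z = pdx i (\<lambda>y. sqrt (uv y)) z"
    by (rule pdx_cong) (simp add: quarter_eq[OF U_slice[OF z]])
  also have "\<dots> = inverse (sqrt (uv z)) / 2 * pdx i uv z"
    by (rule pdx_comp[OF sd_uv[OF z] DERIV_real_sqrt[OF uv_pos[OF z]]])
  finally have e: "pdx i (\<lambda>y. \<rho> y powr (1/4)) z = inverse (sqrt (uv z)) / 2 * gf i z"
    using pdx_uv[OF z] by simp
  show ?thesis unfolding e using uv_pos[OF z]
    by (simp add: power_mult_distrib power_divide power_inverse field_simps)
qed

end



context S5 begin

lemma cyl_sub: "cyl T \<subseteq> U" unfolding cyl_def U_def by auto

lemma cyl_borel: "cyl T \<in> sets (borel :: (real \<times> (real^'n)) measure)"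
proof -
  have e: "cyl T = U \<inter> (UNIV \<times> cbox (0::real^'n) One)" unfolding cyl_def U_def by auto
  have u: "U \<in> sets borel" using U_open by simp
  have c: "(UNIV \<times> cbox (0::real^'n) One) \<in> sets borel"
    by (intro borel_closed closed_Times) auto
  show ?thesis unfolding e by (rule sets.Int[OF u c])
qed

lemma meas_ind:
  assumes "continuous_on U f"
  shows "(\<lambda>z. ennreal (f z) * indicator (cyl T) z) \<in> borel_measurable lborel"
proof -
  have m: "(\<lambda>z. indicator (cyl T) z *\<^sub>R f z) \<in> borel_measurable borel"
    by (rule borel_measurable_continuous_on_indicator[OF cyl_borel continuous_on_subset[OF assms cyl_sub]])
  have "(\<lambda>z. ennreal (indicator (cyl T) z *\<^sub>R f z)) \<in> borel_measurable borel"
    using measurable_compose[OF m measurable_ennreal] by simp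
  moreover have "(\<lambda>z. ennreal (f z) * indicator (cyl T) z) = (\<lambda>z. ennreal (indicator (cyl T) z *\<^sub>R f z))"
    by (auto simp: fun_eq_iff indicator_def)
  ultimately show ?thesis by simp
qed

lemma tonelli:
  fixes F :: "real \<times> (real^'n) \<Rightarrow> ennreal"
  assumes "F \<in> borel_measurable lborel"
  shows "integral\<^sup>N lborel F = (\<integral>\<^sup>+ t. \<integral>\<^sup>+ x. F (t, x) \<partial>lborel \<partial>lborel)"
proof -
  have "F \<in> borel_measurable (lborel \<Otimes>\<^sub>M lborel)" using assms by (simp add: lborel_prod)
  then have "(\<integral>\<^sup>+ t. \<integral>\<^sup>+ x. F (t, x) \<partial>lborel \<partial>lborel) = integral\<^sup>N (lborel \<Otimes>\<^sub>M lborel) F"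
    by (rule lborel.nn_integral_fst)
  then show ?thesis by (simp add: lborel_prod)
qed

lemma inner_in:
  assumes t: "t \<in> {0<..<T}" and fc: "continuous_on U f" and fn: "\<And>z. z \<in> U \<Longrightarrow> 0 \<le> f z"
  shows "(\<integral>\<^sup>+ x. ennreal (f (t, x)) * indicator (cyl T) (t, x) \<partial>lborel) = ennreal (integral (cbox 0 One) (\<lambda>x. f (t, x)))"
proof -
  have "(\<integral>\<^sup>+ x. ennreal (f (t, x)) * indicator (cyl T) (t, x) \<partial>lborel) =
        (\<integral>\<^sup>+ x. ennreal (f (t, x)) * indicator (cbox 0 One) x \<partial>lborel)"
    using t by (intro nn_integral_cong) (simp add: cyl_def indicator_def)
  also have "\<dots> = ennreal (integral (cbox 0 One) (\<lambda>x. f (t, x)))"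
  proof (rule nn_integral_has_integral_lebesgue')
    show "0 \<le> f (t, x)" for x using fn t by (simp add: U_def)
    show "((\<lambda>x. f (t, x)) has_integral integral (cbox 0 One) (\<lambda>x. f (t, x))) (cbox 0 One)"
      by (rule integrable_integral, rule integrable_continuous, rule continuous_on_subset[OF slice_cont[OF fc t]]) auto
  qed
  finally show ?thesis .
qed

lemma inner_out:
  assumes t: "t \<notin> {0<..<T}"
  shows "(\<integral>\<^sup>+ x. ennreal (f (t, x)) * indicator (cyl T) (t, x) \<partial>lborel) = 0"
proof -
  have "(\<lambda>x. ennreal (f (t, x)) * indicator (cyl T) (t, x)) = (\<lambda>x. 0)"
    using t by (auto simp: fun_eq_iff cyl_def indicator_def)
  then show ?thesis by simp
qed

lemma slice_int: fixes f :: "real \<times> (real^'n) \<Rightarrow> real" shows "continuous_on U f \<Longrightarrow> t \<in> {0<..<T} \<Longrightarrow> (\<lambda>x. f (t, x)) integrable_on cbox 0 One"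
  by (rule integrable_continuous, rule continuous_on_subset[OF slice_cont]) auto

lemma int_bound:
  assumes fc: "continuous_on U f" and fn: "\<And>z. z \<in> U \<Longrightarrow> 0 \<le> f z"
    and Rc: "continuous_on U Rr" and Rn: "\<And>z. z \<in> U \<Longrightarrow> 0 \<le> Rr z" and A: "A \<ge> 0"
    and pw: "\<And>z. z \<in> U \<Longrightarrow> f z \<le> A * Rr z + c * (\<Sum>j\<in>UNIV. divF j z)"
  shows "(\<integral>\<^sup>+ z \<in> cyl T. ennreal (f z) \<partial>lborel) \<le> ennreal A * (\<integral>\<^sup>+ z \<in> cyl T. ennreal (Rr z) \<partial>lborel)"
proof -
  have ARc: "continuous_on U (\<lambda>z. A * Rr z)" by (intro continuous_intros Rc)
  have ARn: "\<And>z. z \<in> U \<Longrightarrow> 0 \<le> A * Rr z" using A Rn by simp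
  have "ennreal A * (\<integral>\<^sup>+ z \<in> cyl T. ennreal (Rr z) \<partial>lborel) = (\<integral>\<^sup>+ z. ennreal A * (ennreal (Rr z) * indicator (cyl T) z) \<partial>lborel)"
    by (rule nn_integral_cmult[symmetric]) (rule meas_ind[OF Rc])
  also have "\<dots> = (\<integral>\<^sup>+ z \<in> cyl T. ennreal (A * Rr z) \<partial>lborel)"
  proof (rule nn_integral_cong)
    fix z :: "real \<times> (real^'n)"
    show "ennreal A * (ennreal (Rr z) * indicator (cyl T) z) = ennreal (A * Rr z) * indicator (cyl T) z"
    proof (cases "z \<in> cyl T")
      case True
      then have "z \<in> U" using cyl_sub by blast
      then have "Rr z \<ge> 0" by (rule Rn)
      then show ?thesis using A True by (simp add: ennreal_mult)
    qed simp
  qed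
  finally have eqR: "ennreal A * (\<integral>\<^sup>+ z \<in> cyl T. ennreal (Rr z) \<partial>lborel) = (\<integral>\<^sup>+ z \<in> cyl T. ennreal (A * Rr z) \<partial>lborel)" .
  have "(\<integral>\<^sup>+ z \<in> cyl T. ennreal (f z) \<partial>lborel) = (\<integral>\<^sup>+ t. \<integral>\<^sup>+ x. ennreal (f (t, x)) * indicator (cyl T) (t, x) \<partial>lborel \<partial>lborel)"
    by (rule tonelli[OF meas_ind[OF fc]])
  also have "\<dots> \<le> (\<integral>\<^sup>+ t. \<integral>\<^sup>+ x. ennreal (A * Rr (t, x)) * indicator (cyl T) (t, x) \<partial>lborel \<partial>lborel)"
  proof (rule nn_integral_mono)
    fix t :: real
    show "(\<integral>\<^sup>+ x. ennreal (f (t, x)) * indicator (cyl T) (t, x) \<partial>lborel) \<le>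
          (\<integral>\<^sup>+ x. ennreal (A * Rr (t, x)) * indicator (cyl T) (t, x) \<partial>lborel)"
    proof (cases "t \<in> {0<..<T}")
      case False
      then show ?thesis by (simp add: inner_out)
    next
      case t: True
      have U: "\<And>x. (t, x) \<in> U" using t by (simp add: U_def)
      have "integral (cbox 0 One) (\<lambda>x. f (t, x)) \<le>
            integral (cbox 0 One) (\<lambda>x. A * Rr (t, x) + c * (\<Sum>j\<in>UNIV. divF j (t, x)))"
      proof (rule integral_le)
        show "(\<lambda>x. f (t, x)) integrable_on cbox 0 One" by (rule slice_int[OF fc t])
        have "continuous_on U (\<lambda>z. A * Rr z + c * (\<Sum>j\<in>UNIV. divF j z))"
          by (intro continuous_intros Rc divF_cont)
        then show "(\<lambda>x. A * Rr (t, x) + c * (\<Sum>j\<in>UNIV. divF j (t, x))) integrable_on cbox 0 One"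
          using slice_int[OF _ t] by blast
        show "f (t, x) \<le> A * Rr (t, x) + c * (\<Sum>j\<in>UNIV. divF j (t, x))" for x by (rule pw[OF U])
      qed
      also have "\<dots> = integral (cbox 0 One) (\<lambda>x. A * Rr (t, x)) + c * (\<Sum>j\<in>UNIV. integral (cbox 0 One) (\<lambda>x. divF j (t, x)))"
      proof -
        have i1: "(\<lambda>x. A * Rr (t, x)) integrable_on cbox 0 One" by (rule slice_int[OF ARc t])
        have i2: "\<And>j. (\<lambda>x. divF j (t, x)) integrable_on cbox 0 One" by (rule slice_int[OF divF_cont t])
        have i3: "(\<lambda>x. \<Sum>j\<in>UNIV. divF j (t, x)) integrable_on cbox 0 One"
          by (rule integrable_sum) (use i2 in auto)
        have "((\<lambda>x. A * Rr (t, x) + c * (\<Sum>j\<in>UNIV. divF j (t, x))) has_integral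
           (integral (cbox 0 One) (\<lambda>x. A * Rr (t, x)) + c * (\<Sum>j\<in>UNIV. integral (cbox 0 One) (\<lambda>x. divF j (t, x))))) (cbox 0 One)"
          by (intro has_integral_add has_integral_mult_right has_integral_sum integrable_integral i1 i2) auto
        then show ?thesis by (rule integral_unique)
      qed
      also have "\<dots> = integral (cbox 0 One) (\<lambda>x. A * Rr (t, x))"
        using divF_int0[OF t] by simp
      finally have le: "integral (cbox 0 One) (\<lambda>x. f (t, x)) \<le> integral (cbox 0 One) (\<lambda>x. A * Rr (t, x))" .
      have e1: "(\<integral>\<^sup>+ x. ennreal (f (t, x)) * indicator (cyl T) (t, x) \<partial>lborel) = ennreal (integral (cbox 0 One) (\<lambda>x. f (t, x)))"
        by (rule inner_in[OF t fc fn])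
      have e2: "(\<integral>\<^sup>+ x. ennreal (A * Rr (t, x)) * indicator (cyl T) (t, x) \<partial>lborel) = ennreal (integral (cbox 0 One) (\<lambda>x. A * Rr (t, x)))"
        by (rule inner_in[OF t ARc ARn])
      show ?thesis
        unfolding e1 e2 using le by (rule ennreal_leI)
    qed
  qed
  also have "\<dots> = (\<integral>\<^sup>+ z \<in> cyl T. ennreal (A * Rr z) \<partial>lborel)"
    by (rule tonelli[OF meas_ind[OF ARc], symmetric])
  finally show ?thesis using eqR by simp
qed

end



lemma h1aux: fixes L Y S C Q :: real shows "L/10 \<le> Y + 1/3 * S \<Longrightarrow> Y \<le> C/4 * Q \<Longrightarrow> L \<le> 5/2*C*Q + 10/3*S"
  by (simp add: field_simps)
lemma h2aux: fixes x u :: real shows "u \<noteq> 0 \<Longrightarrow> (2 * x / u)^2 = 4/u^2 * x^2"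
  by (simp add: power_divide power_mult_distrib)

context S5 begin

lemma L1_eq: "z \<in> U \<Longrightarrow> deriv h (\<rho> z) * jac_norm2 (\<lambda>i w. deriv h (\<rho> w) * pdx i (\<lambda>y. sqrt (\<rho> y)) w) z
   = av z * (\<Sum>i\<in>UNIV. \<Sum>j\<in>UNIV. (Dd i j z)^2)"
  unfolding jac_norm2_def by (simp add: w_stmt av_def)

lemma L2_eq: "z \<in> U \<Longrightarrow> (deriv h (\<rho> z))^3 * (grad_norm2 (\<lambda>y. sqrt (\<rho> y)) z)\<^sup>2 / \<rho> z
   = (av z)^3 * (\<Sum>i\<in>UNIV. (gf i z)^2)^2 / (uv z)^2"
  unfolding grad_norm2_def by (simp add: pdx_sqrt_stmt av_def uv_sq)

lemma R_eq: "z \<in> U \<Longrightarrow> h (\<rho> z) * hess_norm2 (\<lambda>y. \<phi> (\<rho> y)) z = h (\<rho> z) * (\<Sum>i\<in>UNIV. \<Sum>j\<in>UNIV. (Hphi i j z)^2)"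
  unfolding hess_norm2_def jac_norm2_def by (simp add: hess_phi_stmt)

lemma P1_eq: "z \<in> U \<Longrightarrow> hess_norm2 (\<lambda>y. sqrt (\<rho> y)) z = (\<Sum>i\<in>UNIV. \<Sum>j\<in>UNIV. (Hu i j z)^2)"
  unfolding hess_norm2_def jac_norm2_def by (simp add: hess_sqrt_stmt)

lemma P2_eq: "z \<in> U \<Longrightarrow> (grad_norm2 (\<lambda>y. \<rho> y powr (1/4)) z)\<^sup>2 = ((\<Sum>i\<in>UNIV. (gf i z)^2) / (4 * uv z))^2"
  unfolding grad_norm2_def by (simp add: pdx_quarter sum_divide_distrib)

lemma Hphi_eq: "z \<in> U \<Longrightarrow> Hphi i j z = 2 * (Dd i j z - (av z * gf i z) * gf j z / uv z) / uv z"
  using uv_pos[of z] unfolding Hphi_def ww_def by (simp add: field_simps power2_eq_square)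

lemma Hphi_cont: "continuous_on U (Hphi i j)"
  unfolding Hphi_def[abs_def]
  by (intro continuous_intros ww_cont Dd_cont uv_cont gf_cont) (use uv_pos in force)

lemma R_bound:
  assumes z: "z \<in> U"
  shows "av z * (\<Sum>i\<in>UNIV. \<Sum>j\<in>UNIV. (Dd i j z - (av z * gf i z) * gf j z / uv z)^2)
     \<le> C0 / 4 * (h (\<rho> z) * (\<Sum>i\<in>UNIV. \<Sum>j\<in>UNIV. (Hphi i j z)^2))"
proof -
  define X where "X = (\<Sum>i\<in>UNIV. \<Sum>j\<in>UNIV. (Dd i j z - (av z * gf i z) * gf j z / uv z)^2)"
  have X0: "X \<ge> 0" unfolding X_def by (simp add: sum_nonneg)
  have u: "uv z > 0" using uv_pos[OF z] .
  have "(\<Sum>i\<in>UNIV. \<Sum>j\<in>UNIV. (Hphi i j z)^2) = (\<Sum>i\<in>UNIV. \<Sum>j\<in>UNIV. 4 / (uv z)^2 * (Dd i j z - (av z * gf i z) * gf j z / uv z)^2)"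
    using u by (intro sum.cong refl) (simp only: Hphi_eq[OF z] h2aux)
  also have "\<dots> = 4 / (uv z)^2 * X" unfolding X_def by (simp add: sum_distrib_left)
  finally have HX: "(\<Sum>i\<in>UNIV. \<Sum>j\<in>UNIV. (Hphi i j z)^2) = 4 / (uv z)^2 * X" .
  have hp: "av z * \<rho> z \<le> C0 * h (\<rho> z)" using h_props[OF rho_pos[OF z]] by (simp add: av_def)
  have "av z * X = (av z * \<rho> z) * X / (uv z)^2" using u uv_sq[OF z] rho_pos[OF z] by (simp add: field_simps)
  also have "\<dots> \<le> (C0 * h (\<rho> z)) * X / (uv z)^2"
    using hp X0 u by (intro divide_right_mono mult_right_mono) auto
  also have "\<dots> = C0 / 4 * (h (\<rho> z) * (4 / (uv z)^2 * X))" using u by (simp add: field_simps)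
  finally show ?thesis unfolding HX X_def .
qed

lemma pw_part1:
  assumes card: "CARD('n) \<le> 3" and z: "z \<in> U"
  shows "av z * (\<Sum>i\<in>UNIV. \<Sum>j\<in>UNIV. (Dd i j z)^2) + (av z)^3 * (\<Sum>i\<in>UNIV. (gf i z)^2)^2 / (uv z)^2
     \<le> 5/2 * C0 * (h (\<rho> z) * (\<Sum>i\<in>UNIV. \<Sum>j\<in>UNIV. (Hphi i j z)^2)) + 10/3 * (\<Sum>j\<in>UNIV. divF j z)"
proof -
  have a: "av z > 0" using h_props[OF rho_pos[OF z]] by (simp add: av_def)
  have 1: "(av z * (\<Sum>i\<in>UNIV. \<Sum>j\<in>UNIV. (Dd i j z)^2) + (av z)^3 * (\<Sum>i\<in>UNIV. (gf i z)^2)^2 / (uv z)^2) / 10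
     \<le> av z * (\<Sum>i\<in>UNIV. \<Sum>j\<in>UNIV. (Dd i j z - (av z * gf i z) * gf j z / uv z)^2) + 1/3 * (\<Sum>j\<in>UNIV. divF j z)"
    using pw1[OF a uv_pos[OF z] card, of "\<lambda>i j. Dd i j z" "\<lambda>i. gf i z"]
    unfolding divF_def ww_def Sw_def by simp
  show ?thesis by (rule h1aux[OF 1 R_bound[OF z]])
qed

lemma pw_part2:
  assumes card: "CARD('n) \<le> 3" and z: "z \<in> U" and c: "c > 0" "\<forall>s>0. c \<le> deriv h s"
  shows "(\<Sum>i\<in>UNIV. \<Sum>j\<in>UNIV. (Hu i j z)^2) + ((\<Sum>i\<in>UNIV. (gf i z)^2) / (4 * uv z))^2
     \<le> (3 + 8*C0^2) / c^3 * (5/2 * C0 * (h (\<rho> z) * (\<Sum>i\<in>UNIV. \<Sum>j\<in>UNIV. (Hphi i j z)^2)) + 10/3 * (\<Sum>j\<in>UNIV. divF j z))"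
proof -
  have p: "\<rho> z > 0" using rho_pos[OF z] .
  have ac: "c \<le> av z" using c p by (simp add: av_def)
  have u: "uv z > 0" using uv_pos[OF z] .
  have b: "\<bar>bv z\<bar> * (uv z)^2 \<le> C0 * av z"
    using h_props[OF p] uv_sq[OF z] by (simp add: av_def bv_def)
  have e: "av z * Hu i j z = Dd i j z - 2 * bv z * uv z * gf j z * gf i z" for i j
    using u unfolding Dd_def gf_def by (simp add: field_simps)
  have 1: "(\<Sum>i\<in>UNIV. \<Sum>j\<in>UNIV. (Hu i j z)^2) + ((\<Sum>i\<in>UNIV. (gf i z)^2) / (4 * uv z))^2
     \<le> (3 + 8*C0^2) / c^3 * (av z * (\<Sum>i\<in>UNIV. \<Sum>j\<in>UNIV. (Dd i j z)^2) + (av z)^3 * (\<Sum>i\<in>UNIV. (gf i z)^2)^2 / (uv z)^2)"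
    by (rule pw2[OF c(1) ac u b e])
  have K: "(3 + 8*C0^2) / c^3 \<ge> 0" using c by simp
  show ?thesis
    using order_trans[OF 1 mult_left_mono[OF pw_part1[OF card z] K]] .
qed


lemma part1:
  assumes card: "CARD('n) \<le> 3"
  shows "(\<integral>\<^sup>+ z \<in> cyl T. ennreal (deriv h (\<rho> z) *
                 jac_norm2 (\<lambda>i w. deriv h (\<rho> w) * pdx i (\<lambda>y. sqrt (\<rho> y)) w) z) \<partial>lborel)
          + (\<integral>\<^sup>+ z \<in> cyl T. ennreal ((deriv h (\<rho> z))^3 *
                 (grad_norm2 (\<lambda>y. sqrt (\<rho> y)) z)\<^sup>2 / \<rho> z) \<partial>lborel)
          \<le> ennreal (5 * C0) * (\<integral>\<^sup>+ z \<in> cyl T. ennreal (h (\<rho> z) * hess_norm2 (\<lambda>y. \<phi> (\<rho> y)) z) \<partial>lborel)"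
proof -
  define A where "A = 5/2 * C0"
  have A: "A \<ge> 0" using C0_pos by (simp add: A_def)
  have av_pos: "z \<in> U \<Longrightarrow> av z > 0" for z using h_props[OF rho_pos[of z]] by (simp add: av_def)
  have n1: "z \<in> U \<Longrightarrow> 0 \<le> av z * (\<Sum>i\<in>UNIV. \<Sum>j\<in>UNIV. (Dd i j z)^2)" for z
    using av_pos[of z] by (simp add: sum_nonneg)
  have n2: "z \<in> U \<Longrightarrow> 0 \<le> (av z)^3 * (\<Sum>i\<in>UNIV. (gf i z)^2)^2 / (uv z)^2" for z
    using av_pos[of z] by simp
  have Rc: "continuous_on U (\<lambda>z. h (\<rho> z) * hess_norm2 (\<lambda>y. \<phi> (\<rho> y)) z)"
  proof (rule continuous_on_cong[THEN iffD2, OF refl])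
    show "continuous_on U (\<lambda>z. h (\<rho> z) * (\<Sum>i\<in>UNIV. \<Sum>j\<in>UNIV. (Hphi i j z)^2))"
      by (intro continuous_intros hr_cont Hphi_cont)
  qed (simp add: R_eq)
  have Rn: "z \<in> U \<Longrightarrow> 0 \<le> h (\<rho> z) * hess_norm2 (\<lambda>y. \<phi> (\<rho> y)) z" for z
    using h_props[OF rho_pos[of z]] by (simp add: R_eq sum_nonneg)
  have pw: "z \<in> U \<Longrightarrow> av z * (\<Sum>i\<in>UNIV. \<Sum>j\<in>UNIV. (Dd i j z)^2) + (av z)^3 * (\<Sum>i\<in>UNIV. (gf i z)^2)^2 / (uv z)^2
      \<le> A * (h (\<rho> z) * hess_norm2 (\<lambda>y. \<phi> (\<rho> y)) z) + 10/3 * (\<Sum>j\<in>UNIV. divF j z)" for z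
    using pw_part1[OF card, of z] by (simp add: R_eq A_def)
  have I1: "(\<integral>\<^sup>+ z \<in> cyl T. ennreal (deriv h (\<rho> z) *
                 jac_norm2 (\<lambda>i w. deriv h (\<rho> w) * pdx i (\<lambda>y. sqrt (\<rho> y)) w) z) \<partial>lborel)
     \<le> ennreal A * (\<integral>\<^sup>+ z \<in> cyl T. ennreal (h (\<rho> z) * hess_norm2 (\<lambda>y. \<phi> (\<rho> y)) z) \<partial>lborel)"
  proof (rule int_bound[OF _ _ Rc Rn A])
    show "continuous_on U (\<lambda>z. deriv h (\<rho> z) * jac_norm2 (\<lambda>i w. deriv h (\<rho> w) * pdx i (\<lambda>y. sqrt (\<rho> y)) w) z)"
    proof (rule continuous_on_cong[THEN iffD2, OF refl])
      show "continuous_on U (\<lambda>z. av z * (\<Sum>i\<in>UNIV. \<Sum>j\<in>UNIV. (Dd i j z)^2))"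
        by (intro continuous_intros av_cont Dd_cont)
    qed (simp add: L1_eq)
    show "0 \<le> deriv h (\<rho> z) * jac_norm2 (\<lambda>i w. deriv h (\<rho> w) * pdx i (\<lambda>y. sqrt (\<rho> y)) w) z" if "z \<in> U" for z
      using n1[OF that] L1_eq[OF that] by simp
    show "deriv h (\<rho> z) * jac_norm2 (\<lambda>i w. deriv h (\<rho> w) * pdx i (\<lambda>y. sqrt (\<rho> y)) w) z
        \<le> A * (h (\<rho> z) * hess_norm2 (\<lambda>y. \<phi> (\<rho> y)) z) + 10/3 * (\<Sum>j\<in>UNIV. divF j z)" if "z \<in> U" for z
      using pw[OF that] n2[OF that] L1_eq[OF that] by simp
  qed
  have I2: "(\<integral>\<^sup>+ z \<in> cyl T. ennreal ((deriv h (\<rho> z))^3 *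
                 (grad_norm2 (\<lambda>y. sqrt (\<rho> y)) z)\<^sup>2 / \<rho> z) \<partial>lborel)
     \<le> ennreal A * (\<integral>\<^sup>+ z \<in> cyl T. ennreal (h (\<rho> z) * hess_norm2 (\<lambda>y. \<phi> (\<rho> y)) z) \<partial>lborel)"
  proof (rule int_bound[OF _ _ Rc Rn A])
    show "continuous_on U (\<lambda>z. (deriv h (\<rho> z))^3 * (grad_norm2 (\<lambda>y. sqrt (\<rho> y)) z)\<^sup>2 / \<rho> z)"
    proof (rule continuous_on_cong[THEN iffD2, OF refl])
      show "continuous_on U (\<lambda>z. (av z)^3 * (\<Sum>i\<in>UNIV. (gf i z)^2)^2 / (uv z)^2)"
        by (intro continuous_intros av_cont gf_cont uv_cont) (use uv_pos in force)
    qed (simp add: L2_eq)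
    show "0 \<le> (deriv h (\<rho> z))^3 * (grad_norm2 (\<lambda>y. sqrt (\<rho> y)) z)\<^sup>2 / \<rho> z" if "z \<in> U" for z
      using n2[OF that] L2_eq[OF that] by simp
    show "(deriv h (\<rho> z))^3 * (grad_norm2 (\<lambda>y. sqrt (\<rho> y)) z)\<^sup>2 / \<rho> z
        \<le> A * (h (\<rho> z) * hess_norm2 (\<lambda>y. \<phi> (\<rho> y)) z) + 10/3 * (\<Sum>j\<in>UNIV. divF j z)" if "z \<in> U" for z
      using pw[OF that] n1[OF that] L2_eq[OF that] by simp
  qed
  have "ennreal A * X + ennreal A * X = ennreal (5 * C0) * X" for X
    using A by (simp add: A_def distrib_right[symmetric] ennreal_plus[symmetric])
  then show ?thesis using add_mono[OF I1 I2] by simp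
qed


lemma part2:
  assumes card: "CARD('n) \<le> 3" and c: "c > 0" "\<forall>s>0. c \<le> deriv h s"
  shows "(\<integral>\<^sup>+ z \<in> cyl T. ennreal (hess_norm2 (\<lambda>y. sqrt (\<rho> y)) z) \<partial>lborel)
          + (\<integral>\<^sup>+ z \<in> cyl T. ennreal ((grad_norm2 (\<lambda>y. \<rho> y powr (1/4)) z)\<^sup>2) \<partial>lborel)
          \<le> ennreal (2 * ((3 + 8*C0^2) / c^3 * (5/2 * C0))) * (\<integral>\<^sup>+ z \<in> cyl T. ennreal (h (\<rho> z) * hess_norm2 (\<lambda>y. \<phi> (\<rho> y)) z) \<partial>lborel)"
proof -
  define K where "K = (3 + 8*C0^2) / c^3"
  define A where "A = K * (5/2 * C0)"
  have K: "K \<ge> 0" using c by (simp add: K_def)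
  have A: "A \<ge> 0" using C0_pos K by (simp add: A_def)
  have n1: "z \<in> U \<Longrightarrow> 0 \<le> (\<Sum>i\<in>UNIV. \<Sum>j\<in>UNIV. (Hu i j z)^2)" for z by (simp add: sum_nonneg)
  have n2: "z \<in> U \<Longrightarrow> 0 \<le> ((\<Sum>i\<in>UNIV. (gf i z)^2) / (4 * uv z))^2" for z by simp
  have Rc: "continuous_on U (\<lambda>z. h (\<rho> z) * hess_norm2 (\<lambda>y. \<phi> (\<rho> y)) z)"
  proof (rule continuous_on_cong[THEN iffD2, OF refl])
    show "continuous_on U (\<lambda>z. h (\<rho> z) * (\<Sum>i\<in>UNIV. \<Sum>j\<in>UNIV. (Hphi i j z)^2))"
      by (intro continuous_intros hr_cont Hphi_cont)
  qed (simp add: R_eq)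
  have Rn: "z \<in> U \<Longrightarrow> 0 \<le> h (\<rho> z) * hess_norm2 (\<lambda>y. \<phi> (\<rho> y)) z" for z
    using h_props[OF rho_pos[of z]] by (simp add: R_eq sum_nonneg)
  have pw: "z \<in> U \<Longrightarrow> (\<Sum>i\<in>UNIV. \<Sum>j\<in>UNIV. (Hu i j z)^2) + ((\<Sum>i\<in>UNIV. (gf i z)^2) / (4 * uv z))^2
      \<le> A * (h (\<rho> z) * hess_norm2 (\<lambda>y. \<phi> (\<rho> y)) z) + (K * (10/3)) * (\<Sum>j\<in>UNIV. divF j z)" for z
  proof -
    assume z: "z \<in> U"
    have "K * (5/2 * C0 * (h (\<rho> z) * (\<Sum>i\<in>UNIV. \<Sum>j\<in>UNIV. (Hphi i j z)^2)) + 10/3 * (\<Sum>j\<in>UNIV. divF j z))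
        = A * (h (\<rho> z) * hess_norm2 (\<lambda>y. \<phi> (\<rho> y)) z) + (K * (10/3)) * (\<Sum>j\<in>UNIV. divF j z)"
      by (simp add: R_eq[OF z] A_def algebra_simps)
    then show ?thesis using pw_part2[OF card z c] unfolding K_def by simp
  qed
  have I1: "(\<integral>\<^sup>+ z \<in> cyl T. ennreal (hess_norm2 (\<lambda>y. sqrt (\<rho> y)) z) \<partial>lborel)
     \<le> ennreal A * (\<integral>\<^sup>+ z \<in> cyl T. ennreal (h (\<rho> z) * hess_norm2 (\<lambda>y. \<phi> (\<rho> y)) z) \<partial>lborel)"
  proof (rule int_bound[OF _ _ Rc Rn A])
    show "continuous_on U (\<lambda>z. hess_norm2 (\<lambda>y. sqrt (\<rho> y)) z)"
    proof (rule continuous_on_cong[THEN iffD2, OF refl])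
      show "continuous_on U (\<lambda>z. (\<Sum>i\<in>UNIV. \<Sum>j\<in>UNIV. (Hu i j z)^2))"
        by (intro continuous_intros Hu_cont)
    qed (simp add: P1_eq)
    show "0 \<le> hess_norm2 (\<lambda>y. sqrt (\<rho> y)) z" if "z \<in> U" for z
      using n1[OF that] P1_eq[OF that] by simp
    show "hess_norm2 (\<lambda>y. sqrt (\<rho> y)) z
        \<le> A * (h (\<rho> z) * hess_norm2 (\<lambda>y. \<phi> (\<rho> y)) z) + (K * (10/3)) * (\<Sum>j\<in>UNIV. divF j z)" if "z \<in> U" for z
      using pw[OF that] n2[OF that] P1_eq[OF that] by linarith
  qed
  have I2: "(\<integral>\<^sup>+ z \<in> cyl T. ennreal ((grad_norm2 (\<lambda>y. \<rho> y powr (1/4)) z)\<^sup>2) \<partial>lborel)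
     \<le> ennreal A * (\<integral>\<^sup>+ z \<in> cyl T. ennreal (h (\<rho> z) * hess_norm2 (\<lambda>y. \<phi> (\<rho> y)) z) \<partial>lborel)"
  proof (rule int_bound[OF _ _ Rc Rn A])
    show "continuous_on U (\<lambda>z. (grad_norm2 (\<lambda>y. \<rho> y powr (1/4)) z)\<^sup>2)"
    proof (rule continuous_on_cong[THEN iffD2, OF refl])
      show "continuous_on U (\<lambda>z. ((\<Sum>i\<in>UNIV. (gf i z)^2) / (4 * uv z))^2)"
        by (intro continuous_intros gf_cont uv_cont) (use uv_pos in force)
    qed (simp add: P2_eq)
    show "0 \<le> (grad_norm2 (\<lambda>y. \<rho> y powr (1/4)) z)\<^sup>2" if "z \<in> U" for z
      by simp
    show "(grad_norm2 (\<lambda>y. \<rho> y powr (1/4)) z)\<^sup>2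
        \<le> A * (h (\<rho> z) * hess_norm2 (\<lambda>y. \<phi> (\<rho> y)) z) + (K * (10/3)) * (\<Sum>j\<in>UNIV. divF j z)" if "z \<in> U" for z
      using pw[OF that] n1[OF that] P2_eq[OF that] by simp
  qed
  have AA: "A + A = 2 * ((3 + 8*C0^2) / c^3 * (5/2 * C0))" by (simp add: A_def K_def)
  have "ennreal A * X + ennreal A * X = ennreal (A + A) * X" for X
    by (simp only: ennreal_plus[OF A A] distrib_right)
  then have "ennreal A * X + ennreal A * X = ennreal (2 * ((3 + 8*C0^2) / c^3 * (5/2 * C0))) * X" for X
    unfolding AA .
  then show ?thesis using add_mono[OF I1 I2] by simp
qed

end

theorem lemma5p1:
  fixes C0 :: real
  assumes "CARD('n::finite) = 2 \<or> CARD('n) = 3"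
  shows "(\<exists>C::real. \<forall>T (\<rho>::real \<times> (real^'n) \<Rightarrow> real) h \<phi>. hyps5p1 C0 T \<rho> h \<phi> \<longrightarrow>
            (\<integral>\<^sup>+ z \<in> cyl T. ennreal (deriv h (\<rho> z) *
                 jac_norm2 (\<lambda>i w. deriv h (\<rho> w) * pdx i (\<lambda>y. sqrt (\<rho> y)) w) z) \<partial>lborel)
          + (\<integral>\<^sup>+ z \<in> cyl T. ennreal ((deriv h (\<rho> z))^3 *
                 (grad_norm2 (\<lambda>y. sqrt (\<rho> y)) z)\<^sup>2 / \<rho> z) \<partial>lborel)
          \<le> ennreal C * (\<integral>\<^sup>+ z \<in> cyl T. ennreal (h (\<rho> z) * hess_norm2 (\<lambda>y. \<phi> (\<rho> y)) z) \<partial>lborel))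
       \<and> (\<forall>c>0. \<exists>C::real. \<forall>T (\<rho>::real \<times> (real^'n) \<Rightarrow> real) h \<phi>.
            hyps5p1 C0 T \<rho> h \<phi> \<and> (\<forall>s>0. c \<le> deriv h s) \<longrightarrow>
            (\<integral>\<^sup>+ z \<in> cyl T. ennreal (hess_norm2 (\<lambda>y. sqrt (\<rho> y)) z) \<partial>lborel)
          + (\<integral>\<^sup>+ z \<in> cyl T. ennreal ((grad_norm2 (\<lambda>y. \<rho> y powr (1/4)) z)\<^sup>2) \<partial>lborel)
          \<le> ennreal C * (\<integral>\<^sup>+ z \<in> cyl T. ennreal (h (\<rho> z) * hess_norm2 (\<lambda>y. \<phi> (\<rho> y)) z) \<partial>lborel))"
proof -
  have card: "CARD('n) \<le> 3" using assms by auto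
  show ?thesis
  proof (intro conjI allI impI)
    show "\<exists>C::real. \<forall>T (\<rho>::real \<times> (real^'n) \<Rightarrow> real) h \<phi>. hyps5p1 C0 T \<rho> h \<phi> \<longrightarrow>
            (\<integral>\<^sup>+ z \<in> cyl T. ennreal (deriv h (\<rho> z) *
                 jac_norm2 (\<lambda>i w. deriv h (\<rho> w) * pdx i (\<lambda>y. sqrt (\<rho> y)) w) z) \<partial>lborel)
          + (\<integral>\<^sup>+ z \<in> cyl T. ennreal ((deriv h (\<rho> z))^3 *
                 (grad_norm2 (\<lambda>y. sqrt (\<rho> y)) z)\<^sup>2 / \<rho> z) \<partial>lborel)
          \<le> ennreal C * (\<integral>\<^sup>+ z \<in> cyl T. ennreal (h (\<rho> z) * hess_norm2 (\<lambda>y. \<phi> (\<rho> y)) z) \<partial>lborel)"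
    proof (intro exI allI impI)
      fix T and \<rho> :: "real \<times> (real^'n) \<Rightarrow> real" and h \<phi> :: "real \<Rightarrow> real"
      assume H: "hyps5p1 C0 T \<rho> h \<phi>"
      interpret S: S5 C0 T \<rho> h \<phi> using H by unfold_locales
      show "(\<integral>\<^sup>+ z \<in> cyl T. ennreal (deriv h (\<rho> z) *
                 jac_norm2 (\<lambda>i w. deriv h (\<rho> w) * pdx i (\<lambda>y. sqrt (\<rho> y)) w) z) \<partial>lborel)
          + (\<integral>\<^sup>+ z \<in> cyl T. ennreal ((deriv h (\<rho> z))^3 *
                 (grad_norm2 (\<lambda>y. sqrt (\<rho> y)) z)\<^sup>2 / \<rho> z) \<partial>lborel)
          \<le> ennreal (5 * C0) * (\<integral>\<^sup>+ z \<in> cyl T. ennreal (h (\<rho> z) * hess_norm2 (\<lambda>y. \<phi> (\<rho> y)) z) \<partial>lborel)"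
        by (rule S.part1[OF card])
    qed
  next
    fix c :: real
    assume c: "c > 0"
    show "\<exists>C::real. \<forall>T (\<rho>::real \<times> (real^'n) \<Rightarrow> real) h \<phi>.
            hyps5p1 C0 T \<rho> h \<phi> \<and> (\<forall>s>0. c \<le> deriv h s) \<longrightarrow>
            (\<integral>\<^sup>+ z \<in> cyl T. ennreal (hess_norm2 (\<lambda>y. sqrt (\<rho> y)) z) \<partial>lborel)
          + (\<integral>\<^sup>+ z \<in> cyl T. ennreal ((grad_norm2 (\<lambda>y. \<rho> y powr (1/4)) z)\<^sup>2) \<partial>lborel)
          \<le> ennreal C * (\<integral>\<^sup>+ z \<in> cyl T. ennreal (h (\<rho> z) * hess_norm2 (\<lambda>y. \<phi> (\<rho> y)) z) \<partial>lborel)"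
    proof (intro exI allI impI)
      fix T and \<rho> :: "real \<times> (real^'n) \<Rightarrow> real" and h \<phi> :: "real \<Rightarrow> real"
      assume H: "hyps5p1 C0 T \<rho> h \<phi> \<and> (\<forall>s>0. c \<le> deriv h s)"
      interpret S: S5 C0 T \<rho> h \<phi> using H by unfold_locales auto
      show "(\<integral>\<^sup>+ z \<in> cyl T. ennreal (hess_norm2 (\<lambda>y. sqrt (\<rho> y)) z) \<partial>lborel)
          + (\<integral>\<^sup>+ z \<in> cyl T. ennreal ((grad_norm2 (\<lambda>y. \<rho> y powr (1/4)) z)\<^sup>2) \<partial>lborel)
          \<le> ennreal (2 * ((3 + 8*C0^2) / c^3 * (5/2 * C0))) * (\<integral>\<^sup>+ z \<in> cyl T. ennreal (h (\<rho> z) * hess_norm2 (\<lambda>y. \<phi> (\<rho> y)) z) \<partial>lborel)"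
        by (rule S.part2[OF card c]) (use H in auto)
    qed
  qed
qed


end
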